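(* Let $I$ be a compact Hausdorff space and $f_i:\mathbb{R}^m\to\mathbb{R}$, $i\in I$, convex functions such that $i\mapsto f_i(x)$ is continuous on $I$ for each $x$; set $F(i,x):=f_i(x)$, $f(x):=\max_{i\in I}f_i(x)$, $I_f(x):=\{i\in I: f_i(x)=f(x)\}$ and $S_f:=\{x: f(x)\le0\}$. Then the following are equivalent: (i) there exists $\tau\in(0,+\infty)$ such that $\inf\left\{\left|\min_{\|h\|=1}f'(\bar x,h)\right|:\bar x\in\mathrm{bdry}(S_f)\right\}>\tau$ and the following qualification condition (QC) holds: for any sequence $\{z_k\}\subseteq S_f\setminus\mathrm{bdry}(S_f)$ for which there is a sequence $\{x_k\}\subseteq\mathrm{bdry}(S_f)$ with $\lim_{k\to\infty}\frac{f(z_k)-f(x_k)}{\|z_k-x_k\|}=0$, one has $\liminf_{k\to\infty}\left|\min_{\|h\|=1}f'(z_k,h)\right|>\tau$; (ii) there exist constants $c,\varepsilon>0$ such that whenever $G\in C(I\times\mathbb{R}^m,\mathbb{R})$ is such that each $g_i:=G(i,\cdot)$ is convex, and, with $g(x):=\max_{i\in I}g_i(x)$ and $I_g(x):=\{i\in I:g_i(x)=g(x)\}$, one has: $\{z\in\mathrm{bdry}(S_f): f_i(z)=g_i(z)\ \forall i\in I\}\neq\emptyset$; $\sup_{i\in I}\mathrm{Lip}(f_i-g_i)<\varepsilon$; for every $x\in\mathbb{R}^m$, $I_g(x)\subseteq I_f(x)$ whenever $\min_{\|h\|=1}f'(x,h)<0$, and $I_f(x)\subseteq I_g(x)$ whenever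 $\min_{\|h\|=1}f'(x,h)>0$; then $\tau_{\min}(G)\le c$; (iii) there exist constants $c,\varepsilon>0$ such that for all $\bar x\in\mathrm{bdry}(S_f)$ and all $u^*\in\mathbb{R}^m$ with $\|u^*\|\le1$, one has $\tau_{\min}(G)\le c$, where $G\in C(I\times\mathbb{R}^m,\mathbb{R})$ is defined by $G(i,x):=f_i(x)+\varepsilon\langle u^*,x-\bar x\rangle$.
   Context: $\mathbb{R}^m$ carries the Euclidean norm, $d(x,D)=\inf\{\|x-y\|:y\in D\}$ (with $\inf\emptyset=+\infty$), $\mathrm{bdry}(D)$ is the boundary of $D$. For a convex $\varphi$, $\varphi'(x,h):=\lim_{t\to0^+}\frac{\varphi(x+th)-\varphi(x)}{t}$. $\mathrm{Lip}(\phi):=\sup_{u\neq v}\frac{|\phi(u)-\phi(v)|}{\|u-v\|}$. For $G\in C(I\times\mathbb{R}^m,\mathbb{R})$ with $g_i:=G(i,\cdot)$ convex and $g:=\max_{i\in I}g_i$, the solution set is $S_G:=\{x: g_i(x)\le0\ \forall i\in I\}$ and the global error bound modulus is $\tau_{\min}(G):=\inf\{\tau>0: d(x,S_G)\le\tau[g(x)]_+\ \forall x\in\mathbb{R}^m\}$, where $[t]_+=\max\{t,0\}$ and $\inf\emptyset=+\infty$. *)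

theory Defs
  imports "HOL-Analysis.Analysis"
begin

definition maxf :: "'i set \<Rightarrow> ('i \<Rightarrow> 'a \<Rightarrow> real) \<Rightarrow> 'a \<Rightarrow> real" where
  "maxf I F x = (SUP i\<in>I. F i x)"

definition active :: "'i set \<Rightarrow> ('i \<Rightarrow> 'a \<Rightarrow> real) \<Rightarrow> 'a \<Rightarrow> 'i set" where
  "active I F x = {i\<in>I. F i x = maxf I F x}"

definition solset :: "'i set \<Rightarrow> ('i \<Rightarrow> 'a \<Rightarrow> real) \<Rightarrow> 'a set" where
  "solset I F = {x. \<forall>i\<in>I. F i x \<le> 0}"

definition dirder :: "('a::real_normed_vector \<Rightarrow> real) \<Rightarrow> 'a \<Rightarrow> 'a \<Rightarrow> real" where
  "dirder \<phi> x h = Lim (at_right 0) (\<lambda>t. (\<phi> (x + t *\<^sub>R h) - \<phi> x) / t)"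

definition mindir :: "('a::real_normed_vector \<Rightarrow> real) \<Rightarrow> 'a \<Rightarrow> real" where
  "mindir \<phi> x = (INF h\<in>sphere 0 1. dirder \<phi> x h)"

definition Lipc :: "('a::real_normed_vector \<Rightarrow> real) \<Rightarrow> ereal" where
  "Lipc \<phi> = (SUP p\<in>{(u,v). u \<noteq> v}. ereal (\<bar>\<phi> (fst p) - \<phi> (snd p)\<bar> / norm (fst p - snd p)))"

definition setdist :: "'a::metric_space \<Rightarrow> 'a set \<Rightarrow> ereal" where
  "setdist x D = (if D = {} then \<infinity> else ereal (infdist x D))"

text \<open>Global error bound modulus (Inf {} = +infinity in ereal).\<close>
definition tau_min :: "'i set \<Rightarrow> ('i \<Rightarrow> 'a::metric_space \<Rightarrow> real) \<Rightarrow> ereal" where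
  "tau_min I G = Inf {ereal \<tau> | \<tau>. \<tau> > 0 \<and>
      (\<forall>x. setdist x (solset I G) \<le> ereal \<tau> * ereal (max (maxf I G x) 0))}"

end

theory Submission
  imports Defs
begin

definition dq :: "('a::real_normed_vector \<Rightarrow> real) \<Rightarrow> 'a \<Rightarrow> 'a \<Rightarrow> real \<Rightarrow> real" where
  "dq \<phi> x h t = (\<phi> (x + t *\<^sub>R h) - \<phi> x) / t"

lemma dq_mono:
  assumes cv: "convex_on UNIV \<phi>" and st: "0 < s" "s \<le> t"
  shows "dq \<phi> x h s \<le> dq \<phi> x h t"
proof -
  have tz: "t \<noteq> 0" using st by simp
  have "(1 - s/t) *\<^sub>R x + (s/t) *\<^sub>R (x + t *\<^sub>R h) = x + s *\<^sub>R h"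
    using tz by (simp add: scaleR_add_right scaleR_diff_left)
  then have "x + s *\<^sub>R h = (1 - s/t) *\<^sub>R x + (s/t) *\<^sub>R (x + t *\<^sub>R h)" by simp
  moreover have "\<phi> ((1 - s/t) *\<^sub>R x + (s/t) *\<^sub>R (x + t *\<^sub>R h)) \<le> (1 - s/t) * \<phi> x + (s/t) * \<phi> (x + t *\<^sub>R h)"
    by (rule convex_onD[OF cv]) (use st in auto)
  ultimately have A: "\<phi> (x + s *\<^sub>R h) \<le> (1 - s/t) * \<phi> x + (s/t) * \<phi> (x + t *\<^sub>R h)"
    by simp
  have "(1 - s/t) * \<phi> x + (s/t) * \<phi> (x + t *\<^sub>R h) = \<phi> x + (s/t) * (\<phi> (x + t *\<^sub>R h) - \<phi> x)"
    by (simp add: algebra_simps)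
  with A have "\<phi> (x + s *\<^sub>R h) - \<phi> x \<le> (s/t) * (\<phi> (x + t *\<^sub>R h) - \<phi> x)" by linarith
  then have "(\<phi> (x + s *\<^sub>R h) - \<phi> x) / s \<le> (1/t) * (\<phi> (x + t *\<^sub>R h) - \<phi> x)"
    using st by (simp add: divide_simps) (simp add: algebra_simps)
  then show ?thesis unfolding dq_def by simp
qed

lemma dq_lower:
  assumes cv: "convex_on UNIV \<phi>" and t: "0 < t"
  shows "\<phi> x - \<phi> (x - h) \<le> dq \<phi> x h t"
proof -
  define a where "a = 1 / (1 + t)"
  have a: "0 \<le> a" "a \<le> 1" "1 - a = t * a" "a * (1 + t) = 1"
    using t by (auto simp: a_def field_simps)
  have "(1 - a) *\<^sub>R (x - h) + a *\<^sub>R (x + t *\<^sub>R h) = (t * a + a) *\<^sub>R x"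
    unfolding a(3) by (simp add: algebra_simps)
  also have "t * a + a = 1" using a(4) by (simp add: algebra_simps)
  finally have eq: "(1 - a) *\<^sub>R (x - h) + a *\<^sub>R (x + t *\<^sub>R h) = x" by simp
  have "\<phi> ((1 - a) *\<^sub>R (x - h) + a *\<^sub>R (x + t *\<^sub>R h)) \<le> (1 - a) * \<phi> (x - h) + a * \<phi> (x + t *\<^sub>R h)"
    by (rule convex_onD[OF cv]) (use a in auto)
  then have "\<phi> x \<le> (1 - a) * \<phi> (x - h) + a * \<phi> (x + t *\<^sub>R h)" by (simp only: eq)
  then have "\<phi> x \<le> t * a * \<phi> (x - h) + a * \<phi> (x + t *\<^sub>R h)" by (simp only: a(3))
  then have "(1 + t) * \<phi> x \<le> (1 + t) * (t * a * \<phi> (x - h) + a * \<phi> (x + t *\<^sub>R h))"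
    using t by simp
  also have "\<dots> = (a * (1 + t)) * (t * \<phi> (x - h)) + (a * (1 + t)) * \<phi> (x + t *\<^sub>R h)"
    by (simp add: algebra_simps)
  also have "\<dots> = t * \<phi> (x - h) + \<phi> (x + t *\<^sub>R h)"
    unfolding a(4) by simp
  finally have "t * (\<phi> x - \<phi> (x - h)) \<le> \<phi> (x + t *\<^sub>R h) - \<phi> x"
    by (simp add: algebra_simps)
  then show ?thesis using t unfolding dq_def by (simp add: pos_le_divide_eq mult.commute)
qed

lemma dq_bdd: "convex_on UNIV \<phi> \<Longrightarrow> bdd_below (dq \<phi> x h ` {0<..})"
  by (rule bdd_belowI2[where m="\<phi> x - \<phi> (x - h)"]) (auto intro: dq_lower)

lemma dq_tendsto:
  assumes cv: "convex_on UNIV \<phi>"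
  shows "(dq \<phi> x h \<longlongrightarrow> Inf (dq \<phi> x h ` {0<..})) (at_right 0)"
proof (rule tendstoI)
  fix e :: real assume e: "e > 0"
  let ?D = "Inf (dq \<phi> x h ` {0<..})"
  have "?D < ?D + e" using e by simp
  then obtain t0 where t0: "t0 > 0" "dq \<phi> x h t0 < ?D + e"
    using cInf_lessD[of "dq \<phi> x h ` {0<..}"] by force
  show "\<forall>\<^sub>F t in at_right 0. dist (dq \<phi> x h t) ?D < e"
    unfolding eventually_at_right_field
  proof (intro exI[of _ t0] conjI allI impI)
    fix t :: real assume "0 < t" "t < t0"
    then have "?D \<le> dq \<phi> x h t" "dq \<phi> x h t \<le> dq \<phi> x h t0"
      using dq_bdd[OF cv] dq_mono[OF cv] by (auto intro: cInf_lower)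
    then show "dist (dq \<phi> x h t) ?D < e" using t0 by (simp add: dist_real_def)
  qed (use t0 in auto)
qed

lemma dirder_eq:
  assumes cv: "convex_on UNIV \<phi>"
  shows "dirder \<phi> x h = Inf (dq \<phi> x h ` {0<..})"
  unfolding dirder_def using tendsto_Lim[OF _ dq_tendsto[OF cv]]
  by (simp add: dq_def[abs_def])

lemma dirder_tendsto:
  assumes cv: "convex_on UNIV \<phi>"
  shows "(dq \<phi> x h \<longlongrightarrow> dirder \<phi> x h) (at_right 0)"
  using dq_tendsto[OF cv] dirder_eq[OF cv] by simp

lemma dirder_le_dq:
  assumes cv: "convex_on UNIV \<phi>" and t: "t > 0"
  shows "dirder \<phi> x h \<le> dq \<phi> x h t"
  unfolding dirder_eq[OF cv] using t by (auto intro!: cInf_lower dq_bdd[OF cv])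

lemma dirder_ge_dq:
  assumes cv: "convex_on UNIV \<phi>" and "\<And>t. t > 0 \<Longrightarrow> a \<le> dq \<phi> x h t"
  shows "a \<le> dirder \<phi> x h"
  unfolding dirder_eq[OF cv] using assms by (auto intro!: cInf_greatest)

lemma dirder_step:
  assumes cv: "convex_on UNIV \<phi>" and t: "t \<ge> 0"
  shows "\<phi> x + t * dirder \<phi> x h \<le> \<phi> (x + t *\<^sub>R h)"
proof (cases "t = 0")
  case False
  with t have "t > 0" by simp
  from dirder_le_dq[OF cv this, of x h] this show ?thesis
    by (simp add: dq_def divide_simps algebra_simps)
qed simp

lemma dirder_step1:
  assumes cv: "convex_on UNIV \<phi>"
  shows "\<phi> x + dirder \<phi> x (y - x) \<le> \<phi> y"
  using dirder_step[OF cv, of 1 x "y - x"] by simp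

lemma dirder_lower:
  assumes cv: "convex_on UNIV \<phi>"
  shows "\<phi> x - \<phi> (x - h) \<le> dirder \<phi> x h"
  by (rule dirder_ge_dq[OF cv]) (rule dq_lower[OF cv])

lemma dirder_eventually:
  assumes cv: "convex_on UNIV \<phi>" and "dirder \<phi> x h < a"
  shows "\<forall>\<^sub>F t in at_right 0. dq \<phi> x h t < a"
  using order_tendstoD(2)[OF dirder_tendsto[OF cv] assms(2)] .

lemma dirder_exists_t:
  assumes cv: "convex_on UNIV \<phi>" and "dirder \<phi> x h < a" and "b > 0"
  shows "\<exists>t. 0 < t \<and> t < b \<and> dq \<phi> x h t < a"
proof -
  obtain c where c: "c > 0" "\<And>y. 0 < y \<Longrightarrow> y < c \<Longrightarrow> dq \<phi> x h y < a"
    using dirder_eventually[OF cv assms(2)] unfolding eventually_at_right_field by auto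
  show ?thesis
    by (rule exI[of _ "min c b / 2"]) (use c \<open>b > 0\<close> in auto)
qed

lemma dirder_zero: "convex_on UNIV \<phi> \<Longrightarrow> dirder \<phi> x 0 = 0"
  unfolding dirder_eq by (simp add: dq_def)

lemma dirder_scale:
  assumes cv: "convex_on UNIV \<phi>" and c: "c > 0"
  shows "dirder \<phi> x (c *\<^sub>R h) = c * dirder \<phi> x h"
proof (rule antisym)
  have dqs: "dq \<phi> x (c *\<^sub>R h) t = c * dq \<phi> x h (c * t)" if "t > 0" for t
    using that c by (simp add: dq_def field_simps)
  show "dirder \<phi> x (c *\<^sub>R h) \<le> c * dirder \<phi> x h"
  proof -
    have "dirder \<phi> x (c *\<^sub>R h) / c \<le> dq \<phi> x h s" if "s > 0" for s
    proof -
      have "dirder \<phi> x (c *\<^sub>R h) \<le> dq \<phi> x (c *\<^sub>R h) (s / c)"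
        using dirder_le_dq[OF cv] that c by simp
      also have "\<dots> = c * dq \<phi> x h s" using dqs[of "s/c"] that c by simp
      finally show ?thesis using c by (simp add: divide_simps mult.commute)
    qed
    then have "dirder \<phi> x (c *\<^sub>R h) / c \<le> dirder \<phi> x h"
      by (rule dirder_ge_dq[OF cv])
    then show ?thesis using c by (simp add: divide_simps mult.commute)
  qed
  show "c * dirder \<phi> x h \<le> dirder \<phi> x (c *\<^sub>R h)"
  proof (rule dirder_ge_dq[OF cv])
    fix t :: real assume "t > 0"
    then show "c * dirder \<phi> x h \<le> dq \<phi> x (c *\<^sub>R h) t"
      using dqs[of t] dirder_le_dq[OF cv, of "c*t" x h] c by simp
  qed
qed

lemma dirder_scale_norm:
  assumes cv: "convex_on UNIV \<phi>" and h: "h \<noteq> 0"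
  shows "dirder \<phi> x h = norm h * dirder \<phi> x (h /\<^sub>R norm h)"
  using dirder_scale[OF cv, of "norm h" x "h /\<^sub>R norm h"] h by simp

lemma dirder_add:
  assumes cv: "convex_on UNIV \<phi>"
  shows "dirder \<phi> x (a + b) \<le> dirder \<phi> x a + dirder \<phi> x b"
proof -
  have key: "dirder \<phi> x (a + b) \<le> dq \<phi> x a (2*t) + dq \<phi> x b (2*t)" if t: "t > 0" for t
  proof -
    have "x + t *\<^sub>R (a + b) = (1 - 1/2) *\<^sub>R (x + (2*t) *\<^sub>R a) + (1/2) *\<^sub>R (x + (2*t) *\<^sub>R b)"
      by (simp add: algebra_simps scaleR_add_left[symmetric])
    then have "\<phi> (x + t *\<^sub>R (a + b)) \<le> (1 - 1/2) * \<phi> (x + (2*t) *\<^sub>R a) + (1/2) * \<phi> (x + (2*t) *\<^sub>R b)"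
      using convex_onD[OF cv, of "1/2" "x + (2*t) *\<^sub>R a" "x + (2*t) *\<^sub>R b"] by simp
    then have "dq \<phi> x (a + b) t \<le> dq \<phi> x a (2*t) + dq \<phi> x b (2*t)"
      using t unfolding dq_def by (simp add: divide_simps)
    then show ?thesis using dirder_le_dq[OF cv t, of x "a + b"] by linarith
  qed
  show ?thesis
  proof (rule field_le_epsilon)
    fix e :: real assume e: "e > 0"
    obtain t1 where t1: "t1 > 0" "dq \<phi> x a t1 < dirder \<phi> x a + e/2"
      using dirder_exists_t[OF cv, of x a "dirder \<phi> x a + e/2" 1] e by auto
    obtain t2 where t2: "t2 > 0" "dq \<phi> x b t2 < dirder \<phi> x b + e/2"
      using dirder_exists_t[OF cv, of x b "dirder \<phi> x b + e/2" 1] e by auto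
    define t where "t = min t1 t2 / 2"
    have "t > 0" "2*t \<le> t1" "2*t \<le> t2" using t1 t2 by (auto simp: t_def)
    then have "dq \<phi> x a (2*t) \<le> dq \<phi> x a t1" "dq \<phi> x b (2*t) \<le> dq \<phi> x b t2"
      using dq_mono[OF cv] by auto
    then show "dirder \<phi> x (a + b) \<le> dirder \<phi> x a + dirder \<phi> x b + e"
      using key[OF \<open>t > 0\<close>] t1 t2 by linarith
  qed
qed

lemma dirder_neg: "convex_on UNIV \<phi> \<Longrightarrow> 0 \<le> dirder \<phi> x h + dirder \<phi> x (- h)"
  using dirder_add[of \<phi> x h "-h"] dirder_zero[of \<phi> x] by simp

lemma dirder_lip:
  assumes cv1: "convex_on UNIV \<phi>" and cv2: "convex_on UNIV \<psi>"
    and L: "\<And>a b. \<bar>(\<psi> a - \<phi> a) - (\<psi> b - \<phi> b)\<bar> \<le> L * norm (a - b)"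
  shows "dirder \<psi> x h \<le> dirder \<phi> x h + L * norm h"
proof -
  have "dirder \<psi> x h - L * norm h \<le> dq \<phi> x h t" if t: "t > 0" for t
  proof -
    have "\<bar>(\<psi> (x + t *\<^sub>R h) - \<phi> (x + t *\<^sub>R h)) - (\<psi> x - \<phi> x)\<bar> \<le> L * (t * norm h)"
      using L[of "x + t *\<^sub>R h" x] t by simp
    then have "dq \<psi> x h t \<le> dq \<phi> x h t + L * norm h"
      using t unfolding dq_def by (simp add: divide_simps abs_le_iff) (simp add: algebra_simps)
    then show ?thesis using dirder_le_dq[OF cv2 t, of x h] by linarith
  qed
  then have "dirder \<psi> x h - L * norm h \<le> dirder \<phi> x h" by (rule dirder_ge_dq[OF cv1])
  then show ?thesis by linarith
qed

lemma dirder_dom: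
  assumes cv1: "convex_on UNIV \<phi>" and cv2: "convex_on UNIV \<psi>"
    and le: "\<And>y. \<phi> y \<le> \<psi> y" and eq: "\<phi> x = \<psi> x"
  shows "dirder \<phi> x h \<le> dirder \<psi> x h"
proof (rule dirder_ge_dq[OF cv2])
  fix t :: real assume t: "t > 0"
  have "dq \<phi> x h t \<le> dq \<psi> x h t"
    unfolding dq_def using le[of "x + t *\<^sub>R h"] eq t by (simp add: divide_right_mono)
  then show "dirder \<phi> x h \<le> dq \<psi> x h t" using dirder_le_dq[OF cv1 t, of x h] by linarith
qed

lemma cv_cont: "convex_on UNIV (\<phi>::'a::euclidean_space \<Rightarrow> real) \<Longrightarrow> continuous_on UNIV \<phi>"
  using convex_on_continuous[OF open_UNIV] by blast

lemma sphere01_ne: "sphere (0::'a::euclidean_space) 1 \<noteq> {}"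
  by (simp add: sphere_eq_empty)

lemma mindir_bdd:
  fixes \<phi> :: "'a::euclidean_space \<Rightarrow> real"
  assumes cv: "convex_on UNIV \<phi>"
  shows "bdd_below ((\<lambda>h. dirder \<phi> x h) ` sphere 0 1)"
proof -
  have "continuous_on (cball x 1) \<phi>" using cv_cont[OF cv] continuous_on_subset by blast
  then obtain m where m: "m \<in> cball x 1" "\<And>y. y \<in> cball x 1 \<Longrightarrow> \<phi> y \<le> \<phi> m"
    using continuous_attains_sup[of "cball x 1" \<phi>] by auto
  show ?thesis
  proof (rule bdd_belowI2[where m="\<phi> x - \<phi> m"])
    fix h :: 'a assume "h \<in> sphere 0 1"
    then have "x - h \<in> cball x 1" by (simp add: dist_norm)
    then have "\<phi> (x - h) \<le> \<phi> m" using m(2) by blast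
    then show "\<phi> x - \<phi> m \<le> dirder \<phi> x h" using dirder_lower[OF cv, of x h] by linarith
  qed
qed

lemma mindir_le:
  fixes \<phi> :: "'a::euclidean_space \<Rightarrow> real"
  assumes cv: "convex_on UNIV \<phi>" and h: "norm h = 1"
  shows "mindir \<phi> x \<le> dirder \<phi> x h"
  unfolding mindir_def by (rule cINF_lower[OF mindir_bdd[OF cv]]) (use h in simp)

lemma mindir_lessD:
  fixes \<phi> :: "'a::euclidean_space \<Rightarrow> real"
  assumes "mindir \<phi> x < a"
  shows "\<exists>h. norm h = 1 \<and> dirder \<phi> x h < a"
  using cInf_lessD[of "(\<lambda>h. dirder \<phi> x h) ` sphere 0 1" a] assms sphere01_ne
  unfolding mindir_def by auto

lemma dirder_ge_mindir:
  fixes \<phi> :: "'a::euclidean_space \<Rightarrow> real"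
  assumes cv: "convex_on UNIV \<phi>"
  shows "mindir \<phi> x * norm h \<le> dirder \<phi> x h"
proof (cases "h = 0")
  case True then show ?thesis by (simp add: dirder_zero[OF cv])
next
  case False
  have "mindir \<phi> x \<le> dirder \<phi> x (h /\<^sub>R norm h)" using mindir_le[OF cv] False by simp
  then have "mindir \<phi> x * norm h \<le> norm h * dirder \<phi> x (h /\<^sub>R norm h)"
    by (simp add: mult.commute mult_left_mono)
  then show ?thesis using dirder_scale_norm[OF cv False] by simp
qed

lemma mindir_step:
  fixes \<phi> :: "'a::euclidean_space \<Rightarrow> real"
  assumes cv: "convex_on UNIV \<phi>"
  shows "\<phi> x + mindir \<phi> x * norm (y - x) \<le> \<phi> y"
  using dirder_step1[OF cv, of x y] dirder_ge_mindir[OF cv, of x "y - x"] by linarith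

lemma sandwich:
  fixes \<phi> :: "'a::euclidean_space \<Rightarrow> real"
  assumes cv: "convex_on UNIV \<phi>" and s: "s \<ge> 0"
    and low: "\<And>y. \<phi> x - s * norm (y - x) \<le> \<phi> y"
  shows "\<exists>w. norm w \<le> s \<and> (\<forall>y. \<phi> x + w \<bullet> (y - x) \<le> \<phi> y)"
proof -
  define S :: "('a \<times> real) set" where "S = {p. \<phi> (x + fst p) - \<phi> x \<le> snd p}"
  define T :: "('a \<times> real) set" where "T = {p. snd p < - s * norm (fst p)}"
  have cS: "convex S"
    unfolding convex_def S_def
  proof (clarify)
    fix h1 r1 h2 r2 and u v :: real
    assume h: "\<phi> (x + fst (h1, r1)) - \<phi> x \<le> snd (h1, r1)" "\<phi> (x + fst (h2, r2)) - \<phi> x \<le> snd (h2, r2)"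
      and uv: "0 \<le> u" "0 \<le> v" "u + v = 1"
    have "x + (u *\<^sub>R h1 + v *\<^sub>R h2) = (1 - v) *\<^sub>R (x + h1) + v *\<^sub>R (x + h2)"
      using uv by (simp add: algebra_simps scaleR_add_left[symmetric])
    moreover have "\<phi> ((1 - v) *\<^sub>R (x + h1) + v *\<^sub>R (x + h2)) \<le> (1 - v) * \<phi> (x + h1) + v * \<phi> (x + h2)"
      by (rule convex_onD[OF cv]) (use uv in auto)
    moreover have "1 - v = u" using uv by simp
    ultimately have "\<phi> (x + (u *\<^sub>R h1 + v *\<^sub>R h2)) \<le> u * \<phi> (x + h1) + v * \<phi> (x + h2)"
      by simp
    moreover have "u * \<phi> (x + h1) \<le> u * (\<phi> x + r1)" using h uv by (intro mult_left_mono) auto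
    moreover have "v * \<phi> (x + h2) \<le> v * (\<phi> x + r2)" using h uv by (intro mult_left_mono) auto
    moreover have "u * \<phi> x + v * \<phi> x = \<phi> x" by (metis uv(3) distrib_right mult_1)
    ultimately have "\<phi> (x + (u *\<^sub>R h1 + v *\<^sub>R h2)) - \<phi> x \<le> u * r1 + v * r2"
      by (simp add: ring_distribs)
    then show "\<phi> (x + fst (u *\<^sub>R (h1, r1) + v *\<^sub>R (h2, r2))) - \<phi> x \<le> snd (u *\<^sub>R (h1, r1) + v *\<^sub>R (h2, r2))"
      by simp
  qed
  have cT: "convex T"
    unfolding convex_def T_def
  proof (clarify)
    fix h1 h2 :: 'a and r1 r2 u v :: real
    assume h: "snd (h1, r1) < - s * norm (fst (h1, r1))" "snd (h2, r2) < - s * norm (fst (h2, r2))"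
      and uv: "0 \<le> u" "0 \<le> v" "u + v = 1"
    have n: "norm (u *\<^sub>R h1 + v *\<^sub>R h2) \<le> u * norm h1 + v * norm h2"
      using norm_triangle_ineq[of "u *\<^sub>R h1" "v *\<^sub>R h2"] uv by simp
    have "u * r1 + v * r2 < - s * (u * norm h1 + v * norm h2)"
    proof (cases "u = 0")
      case True then show ?thesis using h uv by simp
    next
      case False
      then have "u * r1 < u * (- s * norm h1)" using h uv by (intro mult_strict_left_mono) auto
      moreover have "v * r2 \<le> v * (- s * norm h2)" using h uv by (intro mult_left_mono) auto
      ultimately show ?thesis by (simp add: algebra_simps)
    qed
    also have "\<dots> \<le> - s * norm (u *\<^sub>R h1 + v *\<^sub>R h2)" using n s by (simp add: mult_left_mono)
    finally show "snd (u *\<^sub>R (h1, r1) + v *\<^sub>R (h2, r2)) < - s * norm (fst (u *\<^sub>R (h1, r1) + v *\<^sub>R (h2, r2)))"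
      by simp
  qed
  have S0: "(0, 0) \<in> S" by (simp add: S_def)
  have Tm: "(0, - t) \<in> T" if "t > 0" for t using that by (simp add: T_def)
  have disj: "S \<inter> T = {}"
  proof -
    { fix p assume "p \<in> S" "p \<in> T"
      then have "\<phi> (x + fst p) - \<phi> x \<le> snd p" "snd p < - s * norm (fst p)" by (auto simp: S_def T_def)
      moreover have "\<phi> x - s * norm ((x + fst p) - x) \<le> \<phi> (x + fst p)" by (rule low)
      ultimately have False by simp }
    then show ?thesis by blast
  qed
  have ne: "S \<noteq> {}" "T \<noteq> {}" using S0 Tm[of 1] by auto
  obtain a b where ab: "a \<noteq> 0" "\<forall>p\<in>S. inner a p \<le> b" "\<forall>p\<in>T. inner a p \<ge> b"
    using separating_hyperplane_sets[OF cS cT ne disj] by blast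
  obtain a1 \<alpha> where a: "a = (a1, \<alpha>)" by (cases a)
  have Sin: "a1 \<bullet> h + \<alpha> * r \<le> b" if "\<phi> (x + h) - \<phi> x \<le> r" for h r
    using ab(2) that unfolding a S_def by (auto simp: inner_Pair)
  have Tin: "a1 \<bullet> h + \<alpha> * r \<ge> b" if "r < - s * norm h" for h r
    using ab(3) that unfolding a T_def by (auto simp: inner_Pair)
  have b0: "0 \<le> b" using Sin[of 0 0] by simp
  have al: "- \<alpha> * t \<ge> b" if "t > 0" for t using Tin[of "-t" 0] that by simp
  have "\<alpha> \<le> 0" using al[of 1] b0 by simp
  have "\<alpha> \<noteq> 0"
  proof
    assume "\<alpha> = 0"
    then have "a1 \<bullet> a1 \<le> b" using Sin[of a1 "\<phi> (x + a1) - \<phi> x"] by simp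
    moreover have "b = 0"
    proof (rule ccontr)
      assume "b \<noteq> 0"
      with b0 have "b > 0" by simp
      then show False using al[of 1] \<open>\<alpha> = 0\<close> by simp
    qed
    ultimately have "a1 \<bullet> a1 \<le> 0" by simp
    then have "a1 = 0" using inner_gt_zero_iff[of a1] by linarith
    with \<open>\<alpha> = 0\<close> a ab(1) show False by (simp add: zero_prod_def)
  qed
  with \<open>\<alpha> \<le> 0\<close> have neg: "\<alpha> < 0" by simp
  have bz: "b = 0"
  proof (rule ccontr)
    assume "b \<noteq> 0"
    with b0 have bp: "b > 0" by simp
    have "- \<alpha> * (b / (- 2 * \<alpha>)) \<ge> b" using al[of "b / (- 2 * \<alpha>)"] bp neg by (simp add: divide_pos_neg)
    then show False using bp neg by (simp add: field_simps)
  qed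
  define w where "w = (1 / (- \<alpha>)) *\<^sub>R a1"
  have w1: "w \<bullet> h \<le> \<phi> (x + h) - \<phi> x" for h
  proof -
    have "a1 \<bullet> h + \<alpha> * (\<phi> (x + h) - \<phi> x) \<le> 0" using Sin[of h "\<phi> (x + h) - \<phi> x"] bz by simp
    then have "(a1 \<bullet> h) / (- \<alpha>) \<le> \<phi> (x + h) - \<phi> x" using neg by (simp add: divide_simps algebra_simps)
    then show ?thesis by (simp add: w_def)
  qed
  have w2: "w \<bullet> h \<ge> - s * norm h" for h
  proof (rule ccontr)
    assume "\<not> ?thesis"
    then have lt: "w \<bullet> h < - s * norm h" by simp
    define r where "r = (w \<bullet> h + - s * norm h) / 2"
    have "r < - s * norm h" "w \<bullet> h < r" using lt by (auto simp: r_def)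
    from Tin[OF this(1)] bz have "a1 \<bullet> h + \<alpha> * r \<ge> 0" by simp
    then have "(a1 \<bullet> h) / (- \<alpha>) \<ge> r" using neg by (simp add: divide_simps algebra_simps)
    then have "w \<bullet> h \<ge> r" by (simp add: w_def)
    with \<open>w \<bullet> h < r\<close> show False by simp
  qed
  have "norm w \<le> s"
  proof (cases "w = 0")
    case True then show ?thesis using s by simp
  next
    case False
    have "- (w \<bullet> w) \<ge> - s * norm w" using w2[of "- w"] by simp
    then have "norm w * norm w \<le> s * norm w" by (simp add: dot_square_norm power2_eq_square)
    moreover have "norm w > 0" using False by simp
    ultimately show ?thesis by (meson mult_le_cancel_right_pos)
  qed
  moreover have "\<forall>y. \<phi> x + w \<bullet> (y - x) \<le> \<phi> y"
  proof
    fix y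
    have "w \<bullet> (y - x) \<le> \<phi> (x + (y - x)) - \<phi> x" by (rule w1)
    then show "\<phi> x + w \<bullet> (y - x) \<le> \<phi> y" by simp
  qed
  ultimately show ?thesis by blast
qed

lemma subgrad:
  fixes \<phi> :: "'a::euclidean_space \<Rightarrow> real"
  assumes cv: "convex_on UNIV \<phi>"
  shows "\<exists>w. norm w \<le> \<bar>mindir \<phi> z\<bar> \<and> (\<forall>y. \<phi> z + w \<bullet> (y - z) \<le> \<phi> y)"
proof (rule sandwich[OF cv])
  fix y
  have "- \<bar>mindir \<phi> z\<bar> * norm (y - z) \<le> mindir \<phi> z * norm (y - z)"
    by (rule mult_right_mono) auto
  then show "\<phi> z - \<bar>mindir \<phi> z\<bar> * norm (y - z) \<le> \<phi> y" using mindir_step[OF cv, of z y] by linarith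
qed simp

definition fam :: "'i::topological_space set \<Rightarrow> ('i \<Rightarrow> 'a::euclidean_space \<Rightarrow> real) \<Rightarrow> bool" where
  "fam I H \<longleftrightarrow> compact I \<and> I \<noteq> {} \<and> (\<forall>i\<in>I. convex_on UNIV (H i)) \<and> (\<forall>x. continuous_on I (\<lambda>i. H i x))"

lemma maxf_attained:
  assumes "fam I H"
  shows "\<exists>i\<in>I. H i x = maxf I H x"
proof -
  from assms have "compact I" "I \<noteq> {}" "continuous_on I (\<lambda>i. H i x)" by (auto simp: fam_def)
  then obtain i0 where i0: "i0 \<in> I" "\<And>j. j \<in> I \<Longrightarrow> H j x \<le> H i0 x"
    using continuous_attains_sup[of I "\<lambda>i. H i x"] by auto
  have "maxf I H x = H i0 x" unfolding maxf_def
    by (rule cSup_eq_maximum) (use i0 in auto)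
  with i0 show ?thesis by auto
qed

lemma maxf_bdd:
  assumes "fam I H"
  shows "bdd_above ((\<lambda>i. H i x) ` I)"
proof -
  from assms have "compact I" "I \<noteq> {}" "continuous_on I (\<lambda>i. H i x)" by (auto simp: fam_def)
  then obtain i0 where i0: "i0 \<in> I" "\<And>j. j \<in> I \<Longrightarrow> H j x \<le> H i0 x"
    using continuous_attains_sup[of I "\<lambda>i. H i x"] by auto
  show ?thesis by (rule bdd_aboveI2[where M="H i0 x"]) (use i0 in auto)
qed

lemma maxf_ge: "fam I H \<Longrightarrow> i \<in> I \<Longrightarrow> H i x \<le> maxf I H x"
  unfolding maxf_def by (rule cSUP_upper[OF _ maxf_bdd])

lemma maxf_le: "fam I H \<Longrightarrow> (\<And>i. i \<in> I \<Longrightarrow> H i x \<le> c) \<Longrightarrow> maxf I H x \<le> c"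
  unfolding maxf_def by (rule cSUP_least) (auto simp: fam_def)

lemma maxf_convex:
  assumes F: "fam I H"
  shows "convex_on UNIV (maxf I H)"
proof (rule convex_onI)
  fix x y and t :: real
  assume t: "0 < t" "t < 1"
  obtain i where i: "i \<in> I" "H i ((1 - t) *\<^sub>R x + t *\<^sub>R y) = maxf I H ((1 - t) *\<^sub>R x + t *\<^sub>R y)"
    using maxf_attained[OF F] by blast
  have cv: "convex_on UNIV (H i)" using F i by (auto simp: fam_def)
  have "H i ((1 - t) *\<^sub>R x + t *\<^sub>R y) \<le> (1 - t) * H i x + t * H i y"
    by (rule convex_onD[OF cv]) (use t in auto)
  also have "\<dots> \<le> (1 - t) * maxf I H x + t * maxf I H y"
    using maxf_ge[OF F i(1)] t by (intro add_mono mult_left_mono) auto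
  finally show "maxf I H ((1 - t) *\<^sub>R x + t *\<^sub>R y) \<le> (1 - t) * maxf I H x + t * maxf I H y"
    using i by simp
qed simp

lemma fam_cont: "fam I H \<Longrightarrow> continuous_on UNIV (maxf I H)"
  using cv_cont[OF maxf_convex] .

lemma solset_eq: assumes F: "fam I H" shows "solset I H = {x. maxf I H x \<le> 0}"
proof (intro set_eqI iffI)
  fix x assume "x \<in> solset I H"
  then have "\<And>i. i \<in> I \<Longrightarrow> H i x \<le> 0" by (auto simp: solset_def)
  then show "x \<in> {x. maxf I H x \<le> 0}" using maxf_le[OF F] by auto
next
  fix x assume "x \<in> {x. maxf I H x \<le> 0}"
  then have "\<And>i. i \<in> I \<Longrightarrow> H i x \<le> 0" using maxf_ge[OF F] by (meson mem_Collect_eq order_trans)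
  then show "x \<in> solset I H" by (auto simp: solset_def)
qed

lemma solset_closed: assumes "fam I H" shows "closed (solset I H)"
  unfolding solset_eq[OF assms] using closed_Collect_le[OF fam_cont[OF assms] continuous_on_const] by simp

lemma frontier_zero:
  assumes F: "fam I H" and x: "x \<in> frontier (solset I H)"
  shows "maxf I H x = 0"
proof -
  have "x \<in> solset I H" using x solset_closed[OF F] by (simp add: frontier_def)
  then have le: "maxf I H x \<le> 0" using solset_eq[OF F] by auto
  show ?thesis
  proof (rule ccontr)
    assume "maxf I H x \<noteq> 0"
    with le have lt: "maxf I H x < 0" by simp
    have op: "open {y. maxf I H y < 0}"
      using open_Collect_less[OF fam_cont[OF F] continuous_on_const] by simp
    have "{y. maxf I H y < 0} \<subseteq> solset I H" using solset_eq[OF F] by auto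
    then have "x \<in> interior (solset I H)" using op lt interior_maximal by blast
    with x show False by (simp add: frontier_def)
  qed
qed

lemma fam_cv: "fam I H \<Longrightarrow> i \<in> I \<Longrightarrow> convex_on UNIV (H i)"
  by (auto simp: fam_def)

lemma half_aux: "- (a::real) \<le> 1 / 2 * b \<Longrightarrow> - (2 * a) \<le> b" by linarith
lemma half_aux2: "(b::real) \<ge> - c \<Longrightarrow> k = c \<Longrightarrow> g - k \<le> h \<Longrightarrow> True" by simp

lemma danskin:
  fixes I :: "'i::t2_space set"
  assumes F: "fam I H"
  shows "\<exists>i\<in>active I H y. dirder (maxf I H) y h \<le> dirder (H i) y h"
proof -
  define g where "g = maxf I H"
  have cg: "convex_on UNIV g" unfolding g_def by (rule maxf_convex[OF F])
  define D where "D = dirder g y h"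
  define A where "A = g y + D - g (y + h)"
  define K where "K = 2 * \<bar>A\<bar>"
  define L where "L t = {i\<in>I. D \<le> dq (H i) y h t \<and> g y - t * K \<le> H i y}" for t
  have cI: "compact I" "I \<noteq> {}" and clI: "closed I" using F compact_imp_closed by (auto simp: fam_def)
  have contI: "continuous_on I (\<lambda>i. H i x)" for x using F by (auto simp: fam_def)
  have Lclosed: "closed (L t)" if tp: "t > 0" for t
  proof -
    have c1: "continuous_on I (\<lambda>i. dq (H i) y h t)"
      unfolding dq_def using tp by (intro continuous_intros contI) auto
    have "L t = (I \<inter> (\<lambda>i. dq (H i) y h t) -` {D..}) \<inter> (I \<inter> (\<lambda>i. H i y) -` {g y - t * K..})"
      by (auto simp: L_def)
    moreover have "closed (I \<inter> (\<lambda>i. dq (H i) y h t) -` {D..})"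
      by (rule continuous_closed_preimage[OF c1 clI]) simp
    moreover have "closed (I \<inter> (\<lambda>i. H i y) -` {g y - t * K..})"
      by (rule continuous_closed_preimage[OF contI clI]) simp
    ultimately show ?thesis by auto
  qed
  have Lmono: "L s \<subseteq> L t" if "0 < s" "s \<le> t" for s t
  proof
    fix i assume i: "i \<in> L s"
    then have "i \<in> I" by (auto simp: L_def)
    have "dq (H i) y h s \<le> dq (H i) y h t" using dq_mono[OF fam_cv[OF F \<open>i \<in> I\<close>] that] .
    moreover have "s * K \<le> t * K" using that by (intro mult_right_mono) (auto simp: K_def)
    ultimately show "i \<in> L t" using i by (auto simp: L_def)
  qed
  have Lne: "L t \<noteq> {}" if t: "0 < t" "t \<le> 1/2" for t
  proof -
    obtain i where i: "i \<in> I" "H i (y + t *\<^sub>R h) = g (y + t *\<^sub>R h)"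
      using maxf_attained[OF F] unfolding g_def by blast
    have cv: "convex_on UNIV (H i)" using fam_cv[OF F i(1)] .
    have Hy: "H i y \<le> g y" unfolding g_def by (rule maxf_ge[OF F i(1)])
    have Hyh: "H i (y + h) \<le> g (y + h)" unfolding g_def by (rule maxf_ge[OF F i(1)])
    have gs: "g y + t * D \<le> g (y + t *\<^sub>R h)" unfolding D_def using dirder_step[OF cg] t by simp
    have a: "D \<le> dq (H i) y h t"
    proof -
      have "t * D \<le> H i (y + t *\<^sub>R h) - H i y" using gs i(2) Hy by linarith
      then show ?thesis using t unfolding dq_def by (simp add: pos_le_divide_eq mult.commute)
    qed
    have "dq (H i) y h t \<le> dq (H i) y h 1" using dq_mono[OF cv, of t 1] t by simp
    then have "H i (y + t *\<^sub>R h) - H i y \<le> t * (H i (y + h) - H i y)"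
      using t unfolding dq_def by (simp add: divide_simps mult.commute)
    then have "H i (y + t *\<^sub>R h) - H i y \<le> t * (g (y + h) - H i y)"
      using Hyh t by (smt (verit) mult_left_mono)
    then have ineq: "(1 - t) * (H i y - g y) \<ge> t * A"
      using gs i(2) unfolding A_def by (simp add: algebra_simps)
    have "g y - t * K \<le> H i y"
    proof (cases "H i y - g y \<ge> 0")
      case True
      have "0 \<le> t * K" using t by (simp add: K_def)
      then show ?thesis using True by linarith
    next
      case False
      have "(1 - t) * (H i y - g y) \<le> (1/2) * (H i y - g y)"
        using False t by (intro mult_right_mono_neg) auto
      moreover have "t * (- \<bar>A\<bar>) \<le> t * A" using t by (intro mult_left_mono) auto
      moreover have "t * (- \<bar>A\<bar>) = - (t * \<bar>A\<bar>)" "t * K = 2 * (t * \<bar>A\<bar>)" by (simp_all add: K_def)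
      ultimately have "- (t * \<bar>A\<bar>) \<le> 1 / 2 * (H i y - g y)" using ineq by (metis order_trans)
      then have X: "H i y - g y \<ge> - (2 * (t * \<bar>A\<bar>))" by (rule half_aux)
      then show ?thesis unfolding \<open>t * K = 2 * (t * \<bar>A\<bar>)\<close> by simp
    qed
    with a i(1) show ?thesis by (auto simp: L_def)
  qed
  have "I \<inter> \<Inter>(L ` {0<..1/2}) \<noteq> {}"
  proof (rule compact_imp_fip[OF cI(1)])
    show "closed T" if "T \<in> L ` {0<..1/2}" for T using that Lclosed by auto
  next
    fix F' assume F': "finite F'" "F' \<subseteq> L ` {0<..1/2}"
    then obtain T' where T': "T' \<subseteq> {0<..1/2}" "finite T'" "F' = L ` T'"
      by (meson finite_subset_image)
    show "I \<inter> \<Inter>F' \<noteq> {}"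
    proof (cases "T' = {}")
      case True then show ?thesis using T' cI by simp
    next
      case False
      define t0 where "t0 = Min T'"
      have t0: "t0 \<in> T'" "\<And>t. t \<in> T' \<Longrightarrow> t0 \<le> t" using T' False by (auto simp: t0_def)
      have "t0 > 0" "t0 \<le> 1/2" using t0 T' by auto
      then obtain i where "i \<in> L t0" using Lne by blast
      have "i \<in> L t" if "t \<in> T'" for t
        using Lmono[OF \<open>t0 > 0\<close> t0(2)[OF that]] \<open>i \<in> L t0\<close> by blast
      moreover have "i \<in> I" using \<open>i \<in> L t0\<close> by (simp add: L_def)
      ultimately have "i \<in> I \<inter> \<Inter>F'" using T'(3) by blast
      then show ?thesis by blast
    qed
  qed
  then obtain i where i0: "i \<in> I" "\<forall>t\<in>{0<..1/2}. i \<in> L t" by blast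
  have i: "i \<in> I" "\<And>t. 0 < t \<Longrightarrow> t \<le> 1/2 \<Longrightarrow> i \<in> L t" using i0 by auto
  have cv: "convex_on UNIV (H i)" using fam_cv[OF F i(1)] .
  have act: "H i y = g y"
  proof (rule ccontr)
    assume ne: "H i y \<noteq> g y"
    have "H i y \<le> g y" unfolding g_def by (rule maxf_ge[OF F i(1)])
    with ne have pos: "g y - H i y > 0" by simp
    define t where "t = min (1/2) ((g y - H i y) / (K + 1))"
    have K0: "K \<ge> 0" by (simp add: K_def)
    have t1: "t \<le> 1/2" unfolding t_def by (rule min.cobounded1)
    have t0: "0 < t" unfolding t_def using pos K0 by simp
    note t = t0 t1
    have "t \<le> (g y - H i y) / (K + 1)" unfolding t_def by (rule min.cobounded2)
    then have "t * (K + 1) \<le> g y - H i y" using K0 by (simp add: pos_le_divide_eq)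
    then have "t * K < g y - H i y" using t by (simp add: algebra_simps)
    moreover have "g y - t * K \<le> H i y" using i(2)[OF t] by (auto simp: L_def)
    ultimately show False by simp
  qed
  have "D \<le> dirder (H i) y h"
  proof (rule dirder_ge_dq[OF cv])
    fix t :: real assume t: "t > 0"
    show "D \<le> dq (H i) y h t"
    proof (cases "t \<le> 1/2")
      case True then show ?thesis using i(2)[OF t] by (auto simp: L_def)
    next
      case False
      then have "dq (H i) y h (1/2) \<le> dq (H i) y h t" using dq_mono[OF cv, of "1/2" t] by simp
      moreover have "D \<le> dq (H i) y h (1/2)" using i(2)[of "1/2"] by (auto simp: L_def)
      ultimately show ?thesis by simp
    qed
  qed
  moreover have "i \<in> active I H y" using act i(1) by (simp add: active_def g_def)
  ultimately show ?thesis unfolding D_def g_def by blast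
qed

lemma infdist_geI:
  assumes "A \<noteq> {}" "\<And>a. a \<in> A \<Longrightarrow> d \<le> dist x a"
  shows "d \<le> infdist x A"
  unfolding infdist_notempty[OF assms(1)] by (rule cINF_greatest) (use assms in auto)

lemma error_bound:
  assumes F: "fam I H" and ne: "solset I H \<noteq> {}" and kp: "\<kappa> > 0"
    and slope: "\<And>y. maxf I H y > 0 \<Longrightarrow> mindir (maxf I H) y \<le> - \<kappa>"
  shows "tau_min I H \<le> ereal (2 / \<kappa>)"
proof -
  define g where "g = maxf I H"
  define S where "S = solset I H"
  have S: "S = {x. g x \<le> 0}" unfolding S_def g_def by (rule solset_eq[OF F])
  have cg: "convex_on UNIV g" unfolding g_def by (rule maxf_convex[OF F])
  have contg: "continuous_on UNIV g" by (rule cv_cont[OF cg])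
  define k where "k = \<kappa> / 2"
  have kp2: "k > 0" using kp by (simp add: k_def)
  have key: "infdist y S \<le> (2 / \<kappa>) * max (g y) 0" for y
  proof (cases "g y \<le> 0")
    case True
    then have "y \<in> S" using S by simp
    then have "infdist y S = 0" by (simp add: infdist_zero)
    then show ?thesis using kp by simp
  next
    case False
    then have gy: "g y > 0" by simp
    define r where "r = infdist y S"
    show ?thesis
    proof (rule ccontr)
      assume "\<not> ?thesis"
      then have "(2 / \<kappa>) * g y < r" using gy by (simp add: r_def)
      then have lt: "g y < k * r" using kp by (simp add: k_def field_simps)
      define \<psi> where "\<psi> x = max (g x) 0 + k * norm (x - y)" for x
      have cpsi: "continuous_on (cball y r) \<psi>"
        unfolding \<psi>_def by (intro continuous_intros continuous_on_subset[OF contg]) auto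
      have r0: "r \<ge> 0" unfolding r_def by (rule infdist_nonneg)
      obtain xs where xs: "xs \<in> cball y r" "\<And>z. z \<in> cball y r \<Longrightarrow> \<psi> xs \<le> \<psi> z"
        using continuous_attains_inf[OF compact_cball _ cpsi] r0 by (metis centre_in_cball empty_iff)
      have psiy: "\<psi> y = g y" using gy by (simp add: \<psi>_def)
      have le1: "\<psi> xs \<le> g y" using xs(2)[of y] r0 psiy by simp
      have gxs: "g xs > 0"
      proof (rule ccontr)
        assume "\<not> g xs > 0"
        then have "xs \<in> S" using S by simp
        then have "r \<le> dist y xs" unfolding r_def by (rule infdist_le)
        then have "k * r \<le> k * norm (xs - y)" using kp2 by (simp add: dist_norm norm_minus_commute)
        moreover have "\<psi> xs \<ge> k * norm (xs - y)" by (simp add: \<psi>_def)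
        ultimately show False using le1 lt by simp
      qed
      have "k * norm (xs - y) \<le> \<psi> xs" by (simp add: \<psi>_def)
      then have "k * norm (xs - y) < k * r" using le1 lt by simp
      then have inner: "norm (xs - y) < r" using kp2 by simp
      have "mindir g xs < - (3/4) * \<kappa>" using slope[of xs] gxs kp unfolding g_def by simp
      then obtain h where h: "norm h = 1" "dirder g xs h < - (3/4) * \<kappa>" using mindir_lessD by blast
      have bpos: "min (r - norm (xs - y)) (g xs / \<kappa>) > 0" using inner gxs kp by simp
      obtain t where t: "0 < t" "t < min (r - norm (xs - y)) (g xs / \<kappa>)"
          "dq g xs h t < - (3/4) * \<kappa>"
        using dirder_exists_t[OF cg h(2) bpos] by blast
      have t1: "t < r - norm (xs - y)" and t2: "t * \<kappa> < g xs" using t kp by (auto simp: pos_less_divide_eq)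
      have gdec: "g (xs + t *\<^sub>R h) < g xs - (3/4) * \<kappa> * t"
        using t(1,3) unfolding dq_def by (simp add: pos_divide_less_eq algebra_simps)
      have "(3/4) * \<kappa> * t \<le> t * \<kappa>" using t(1) kp by simp
      then have "0 \<le> g xs - (3/4) * \<kappa> * t" using t2 by linarith
      then have mx: "max (g (xs + t *\<^sub>R h)) 0 \<le> g xs - (3/4) * \<kappa> * t"
        using gdec by simp
      have "norm (xs + t *\<^sub>R h - y) \<le> norm (xs - y) + t"
        using norm_triangle_ineq[of "xs - y" "t *\<^sub>R h"] h t(1) by (simp add: algebra_simps)
      then have nin: "xs + t *\<^sub>R h \<in> cball y r" and nb: "k * norm (xs + t *\<^sub>R h - y) \<le> k * (norm (xs - y) + t)"
        using t1 kp2 by (auto simp: dist_norm norm_minus_commute intro: mult_left_mono)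
      have "\<psi> (xs + t *\<^sub>R h) \<le> g xs - (3/4) * \<kappa> * t + k * (norm (xs - y) + t)"
        unfolding \<psi>_def using mx nb by linarith
      also have "\<dots> = \<psi> xs - (\<kappa> / 4) * t" using gxs by (simp add: \<psi>_def k_def algebra_simps)
      also have "\<dots> < \<psi> xs" using kp t(1) by simp
      finally show False using xs(2)[OF nin] by simp
    qed
  qed
  have "ereal (2 / \<kappa>) \<in> {ereal \<tau> |\<tau>. 0 < \<tau> \<and> (\<forall>x. setdist x (solset I H) \<le> ereal \<tau> * ereal (max (maxf I H x) 0))}"
  proof -
    have "setdist x (solset I H) \<le> ereal (2 / \<kappa>) * ereal (max (maxf I H x) 0)" for x
    proof -
      have "setdist x (solset I H) = ereal (infdist x S)" using ne by (simp add: setdist_def S_def)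
      moreover have "ereal (2 / \<kappa>) * ereal (max (maxf I H x) 0) = ereal ((2 / \<kappa>) * max (g x) 0)"
        unfolding g_def by (rule times_ereal.simps(1))
      ultimately show ?thesis using key[of x] by simp
    qed
    then have A: "\<forall>x. setdist x (solset I H) \<le> ereal (2 / \<kappa>) * ereal (max (maxf I H x) 0)" by blast
    show ?thesis unfolding mem_Collect_eq
      by (rule exI[of _ "2 / \<kappa>"]) (use kp A in simp)
  qed
  then show ?thesis unfolding tau_min_def by (rule Inf_lower)
qed

lemma tau_rev:
  assumes tm: "tau_min I H \<le> ereal c" and gy: "maxf I H y > 0"
    and D: "\<And>x. x \<in> solset I H \<Longrightarrow> D \<le> norm (y - x)"
  shows "D \<le> c * maxf I H y"
proof (rule ccontr)
  assume "\<not> ?thesis"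
  then have lt: "c * maxf I H y < D" by simp
  define c' where "c' = (c + D / maxf I H y) / 2"
  have cc: "c < c'" "c' * maxf I H y < D" using lt gy by (auto simp: c'_def field_simps)
  then have "ereal c < ereal c'" by simp
  then have "tau_min I H < ereal c'" using tm by (rule le_less_trans[rotated])
  then obtain z where z: "z \<in> {ereal \<tau> |\<tau>. 0 < \<tau> \<and> (\<forall>x. setdist x (solset I H) \<le> ereal \<tau> * ereal (max (maxf I H x) 0))}" "z < ereal c'"
    unfolding tau_min_def by (auto simp: Inf_less_iff)
  then obtain \<tau> where \<tau>: "z = ereal \<tau>" "\<tau> > 0" "setdist y (solset I H) \<le> ereal \<tau> * ereal (max (maxf I H y) 0)" by auto
  have em: "ereal \<tau> * ereal (max (maxf I H y) 0) = ereal (\<tau> * max (maxf I H y) 0)"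
    by (rule times_ereal.simps(1))
  have "solset I H \<noteq> {}"
  proof
    assume "solset I H = {}"
    then have "setdist y (solset I H) = \<infinity>" by (simp add: setdist_def)
    moreover have "setdist y (solset I H) \<le> ereal (\<tau> * max (maxf I H y) 0)" using \<tau>(3) unfolding em .
    ultimately show False by simp
  qed
  then have "infdist y (solset I H) \<le> \<tau> * maxf I H y" using \<tau>(3) gy by (simp add: setdist_def)
  moreover have "D \<le> infdist y (solset I H)"
    by (rule infdist_geI[OF \<open>solset I H \<noteq> {}\<close>]) (simp add: D dist_norm)
  moreover have "\<tau> * maxf I H y < c' * maxf I H y" using z \<tau> gy by simp
  ultimately show False using cc by simp
qed

lemma outside_slope:
  fixes f :: "'a::euclidean_space \<Rightarrow> real"
  assumes cv: "convex_on UNIV f" and ne: "{x. f x \<le> 0} \<noteq> {}" and tp: "\<tau> > 0"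
    and bd: "\<And>p. p \<in> frontier {x. f x \<le> 0} \<Longrightarrow> \<tau> < \<bar>mindir f p\<bar>"
    and fy: "f y > 0"
  shows "mindir f y \<le> - \<tau>"
proof -
  define S where "S = {x. f x \<le> 0}"
  have clS: "closed S" unfolding S_def using closed_Collect_le[OF cv_cont[OF cv] continuous_on_const] by simp
  obtain p where p: "p \<in> S" "infdist y S = dist y p"
    using infdist_attains_inf[OF clS ne[folded S_def]] by blast
  have yS: "y \<notin> S" using fy by (simp add: S_def)
  define r where "r = norm (y - p)"
  have r0: "r > 0" using p(1) yS by (auto simp: r_def)
  define d where "d = (1 / r) *\<^sub>R (y - p)"
  have nd: "norm d = 1" using r0 by (simp add: d_def r_def)
  have yd: "y = p + r *\<^sub>R d" using r0 by (simp add: d_def)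
  have near: "r \<le> norm (y - q)" if "q \<in> S" for q
    using infdist_le[OF that, of y] p(2) by (simp add: r_def dist_norm)
  have fp: "f p \<le> 0" using p(1) by (simp add: S_def)
  have pfr: "p \<in> frontier S"
  proof -
    have "p \<notin> interior S"
    proof
      assume "p \<in> interior S"
      then obtain e where e: "e > 0" "ball p e \<subseteq> S" by (auto simp: mem_interior)
      define q where "q = p + (min e r / 2) *\<^sub>R d"
      have "dist p q < e" using e r0 nd by (simp add: q_def dist_norm)
      then have "q \<in> S" using e by auto
      have "y - q = (r - min e r / 2) *\<^sub>R d" by (simp add: yd q_def algebra_simps)
      then have "norm (y - q) = r - min e r / 2" using nd e r0 by simp
      then show False using near[OF \<open>q \<in> S\<close>] e r0 by simp
    qed
    then show ?thesis using p(1) clS by (simp add: frontier_def)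
  qed
  have mp: "\<tau> < \<bar>mindir f p\<bar>" using bd pfr by (simp add: S_def)
  have dpd: "\<tau> \<le> dirder f p d"
  proof (cases "mindir f p > 0")
    case True
    then show ?thesis using mp mindir_le[OF cv nd, of p] by simp
  next
    case False
    then have "mindir f p < - \<tau>" using mp by simp
    then obtain h where h: "norm h = 1" "dirder f p h < - \<tau>" using mindir_lessD by blast
    show ?thesis
    proof (rule ccontr)
      assume "\<not> ?thesis"
      then have "dirder f p d < \<tau>" by simp
      define k where "k = d + h"
      have dk: "dirder f p k < 0" using dirder_add[OF cv, of p d h] h \<open>dirder f p d < \<tau>\<close> by (simp add: k_def)
      have ip: "d \<bullet> k \<le> 0"
      proof (rule ccontr)
        assume "\<not> d \<bullet> k \<le> 0"
        then have dkp: "d \<bullet> k > 0" by simp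
        define b where "b = 2 * r * (d \<bullet> k) / ((norm k)\<^sup>2 + 1)"
        have kp1: "(norm k)\<^sup>2 + 1 > 0" by (simp add: add_nonneg_pos)
        then have bp: "b > 0" using r0 dkp unfolding b_def by (intro divide_pos_pos mult_pos_pos) auto
        obtain t where t: "0 < t" "t < b" "dq f p k t < 0" using dirder_exists_t[OF cv dk bp] by blast
        have "f (p + t *\<^sub>R k) < f p" using t(1,3) by (simp add: dq_def divide_less_0_iff)
        then have "p + t *\<^sub>R k \<in> S" using fp by (simp add: S_def)
        from near[OF this] have "r \<le> norm (r *\<^sub>R d - t *\<^sub>R k)" by (simp add: yd algebra_simps)
        then have "r\<^sup>2 \<le> (norm (r *\<^sub>R d - t *\<^sub>R k))\<^sup>2" using r0 by (simp add: power_mono)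
        also have "\<dots> = (r *\<^sub>R d - t *\<^sub>R k) \<bullet> (r *\<^sub>R d - t *\<^sub>R k)" by (rule power2_norm_eq_inner)
        also have "\<dots> = r * r * (d \<bullet> d) - 2 * r * t * (d \<bullet> k) + t * t * (k \<bullet> k)"
          by (simp add: inner_diff_left inner_diff_right inner_commute algebra_simps)
        also have "d \<bullet> d = 1" using nd by (simp add: dot_square_norm)
        also have "k \<bullet> k = (norm k)\<^sup>2" by (simp add: dot_square_norm)
        also have "r * r * 1 = r\<^sup>2" by (simp add: power2_eq_square)
        also have "t * t * (norm k)\<^sup>2 = t\<^sup>2 * (norm k)\<^sup>2" by (simp add: power2_eq_square)
        finally have "2 * r * t * (d \<bullet> k) \<le> t\<^sup>2 * (norm k)\<^sup>2" by simp
        then have "2 * r * (d \<bullet> k) \<le> t * (norm k)\<^sup>2" using t(1) by (simp add: power2_eq_square algebra_simps)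
        also have "\<dots> \<le> t * ((norm k)\<^sup>2 + 1)" using t(1) by simp
        also have "\<dots> < b * ((norm k)\<^sup>2 + 1)" using t(2) kp1 by (intro mult_strict_right_mono) auto
        also have "\<dots> = 2 * r * (d \<bullet> k)" unfolding b_def using kp1 by simp
        finally show False by simp
      qed
      have dd: "d \<bullet> d = 1" using nd by (simp add: dot_square_norm)
      have hh: "h \<bullet> h = 1" using h(1) by (simp add: dot_square_norm)
      have "(norm k)\<^sup>2 = k \<bullet> k" by (rule power2_norm_eq_inner)
      also have "\<dots> = d \<bullet> d + 2 * (d \<bullet> h) + h \<bullet> h"
        by (simp add: k_def inner_add_left inner_add_right inner_commute)
      also have "\<dots> = 2 * (d \<bullet> k)" using dd hh by (simp add: k_def inner_add_right)
      finally have "(norm k)\<^sup>2 = 2 * (d \<bullet> k)" .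
      with ip have "(norm k)\<^sup>2 \<le> 0" by simp
      then have "k = 0" by simp
      then have "h = - d" by (simp add: k_def add_eq_0_iff)
      then have "0 \<le> dirder f p d + dirder f p h" using dirder_neg[OF cv, of p d] by simp
      then show False using h(2) \<open>dirder f p d < \<tau>\<close> by simp
    qed
  qed
  have "dirder f y (- d) \<le> dq f y (- d) r" by (rule dirder_le_dq[OF cv r0])
  also have "\<dots> = (f p - f y) / r" by (simp add: dq_def yd)
  finally have a: "dirder f y (- d) \<le> (f p - f y) / r" .
  have "dirder f p d \<le> dq f p d r" by (rule dirder_le_dq[OF cv r0])
  also have "\<dots> = (f y - f p) / r" by (simp add: dq_def yd)
  finally have b: "dirder f p d \<le> (f y - f p) / r" .
  have "(f p - f y) / r = - ((f y - f p) / r)" by (metis minus_diff_eq minus_divide_left)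
  with a b dpd have "dirder f y (- d) \<le> - \<tau>" by linarith
  moreover have "mindir f y \<le> dirder f y (- d)" using mindir_le[OF cv, of "- d" y] nd by simp
  ultimately show ?thesis by simp
qed

lemma equi_bound:
  fixes \<phi> :: "'a::euclidean_space \<Rightarrow> real"
  assumes cv: "convex_on UNIV \<phi>" and M: "\<And>z. z \<in> cball x0 1 \<Longrightarrow> \<phi> z \<le> M"
    and m: "m \<le> \<phi> x0" and x: "norm (x - x0) \<le> 1"
  shows "\<bar>\<phi> x - \<phi> x0\<bar> \<le> norm (x - x0) * (M - m)"
proof (cases "x = x0")
  case True
  have "M - m \<ge> 0" using M[of x0] m by simp
  then show ?thesis using True by simp
next
  case False
  define t where "t = norm (x - x0)"
  have t: "0 < t" "t \<le> 1" using False x by (auto simp: t_def)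
  define v where "v = (1 / t) *\<^sub>R (x - x0)"
  have nv: "norm v = 1" using t by (simp add: v_def t_def)
  have xv: "x = x0 + t *\<^sub>R v" using t by (simp add: v_def)
  have up: "dq \<phi> x0 v t \<le> M - m"
  proof -
    have "dq \<phi> x0 v t \<le> dq \<phi> x0 v 1" using dq_mono[OF cv t(1) t(2)] .
    also have "\<dots> = \<phi> (x0 + v) - \<phi> x0" by (simp add: dq_def)
    also have "\<dots> \<le> M - m" using M[of "x0 + v"] m nv by (simp add: dist_norm)
    finally show ?thesis .
  qed
  have lo: "m - M \<le> dq \<phi> x0 v t"
  proof -
    have "\<phi> (x0 - v) \<le> M" using M[of "x0 - v"] nv by (simp add: dist_norm)
    then have "m - M \<le> \<phi> x0 - \<phi> (x0 - v)" using m by simp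
    also have "\<dots> \<le> dq \<phi> x0 v t" by (rule dq_lower[OF cv t(1)])
    finally show ?thesis .
  qed
  have eq: "\<phi> x - \<phi> x0 = t * dq \<phi> x0 v t" using t by (simp add: dq_def xv)
  have "\<bar>dq \<phi> x0 v t\<bar> \<le> M - m" using up lo by simp
  then have "t * \<bar>dq \<phi> x0 v t\<bar> \<le> t * (M - m)" using t by (simp add: mult_left_mono)
  then show ?thesis using eq t by (simp add: abs_mult t_def)
qed

lemma joint_cont:
  fixes I :: "'i::t2_space set" and H :: "'i \<Rightarrow> 'a::euclidean_space \<Rightarrow> real"
  assumes F: "fam I H"
  shows "continuous_on (I \<times> UNIV) (\<lambda>(i, x). H i x)"
  unfolding continuous_on_topological
proof (intro ballI allI impI)
  fix p B assume p: "p \<in> I \<times> UNIV" and B: "open B" "(\<lambda>(i, x). H i x) p \<in> B"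
  obtain i0 x0 where p0: "p = (i0, x0)" by (cases p)
  have i0: "i0 \<in> I" using p p0 by simp
  obtain e where e: "e > 0" "ball (H i0 x0) e \<subseteq> B" using B p0 by (auto elim!: openE)
  have cI: "compact I" "I \<noteq> {}" using F by (auto simp: fam_def)
  have contI: "continuous_on I (\<lambda>i. H i x)" for x using F by (auto simp: fam_def)
  obtain zM where zM: "zM \<in> cball x0 1" "\<And>z. z \<in> cball x0 1 \<Longrightarrow> maxf I H z \<le> maxf I H zM"
    using continuous_attains_sup[OF compact_cball _ continuous_on_subset[OF fam_cont[OF F]], of x0 1]
    by (metis centre_in_cball empty_iff zero_le_one subset_UNIV)
  define M where "M = maxf I H zM"
  obtain im where im: "im \<in> I" "\<And>i. i \<in> I \<Longrightarrow> H im x0 \<le> H i x0"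
    using continuous_attains_inf[OF cI contI] by blast
  define m where "m = H im x0"
  have Mb: "H i z \<le> M" if "i \<in> I" "z \<in> cball x0 1" for i z
    using maxf_ge[OF F that(1), of z] zM(2)[OF that(2)] by (simp add: M_def)
  have mb: "m \<le> H i x0" if "i \<in> I" for i using im(2)[OF that] by (simp add: m_def)
  have Mm: "M - m \<ge> 0" using Mb[OF i0, of x0] mb[OF i0] by simp
  obtain U where U: "open U" "i0 \<in> U" "\<And>i. i \<in> I \<Longrightarrow> i \<in> U \<Longrightarrow> H i x0 \<in> ball (H i0 x0) (e/2)"
    using contI[of x0] i0 e(1) unfolding continuous_on_topological
    by (metis open_ball centre_in_ball half_gt_zero)
  define \<delta> where "\<delta> = min 1 (e / (2 * (M - m) + 2))"
  have \<delta>: "\<delta> > 0" "\<delta> \<le> 1" "\<delta> * (M - m) < e / 2"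
  proof -
    show "\<delta> > 0" using e Mm by (simp add: \<delta>_def)
    show "\<delta> \<le> 1" by (simp add: \<delta>_def)
    have "\<delta> \<le> e / (2 * (M - m) + 2)" by (simp add: \<delta>_def)
    then have "\<delta> * (M - m) \<le> e / (2 * (M - m) + 2) * (M - m)" by (rule mult_right_mono[OF _ Mm])
    also have "\<dots> < e / 2" using e Mm by (simp add: field_simps)
    finally show "\<delta> * (M - m) < e / 2" .
  qed
  show "\<exists>A. open A \<and> p \<in> A \<and> (\<forall>y\<in>I \<times> UNIV. y \<in> A \<longrightarrow> (\<lambda>(i, x). H i x) y \<in> B)"
  proof (intro exI[of _ "U \<times> ball x0 \<delta>"] conjI ballI impI)
    show "open (U \<times> ball x0 \<delta>)" using U(1) by (simp add: open_Times)
    show "p \<in> U \<times> ball x0 \<delta>" using p0 U(2) \<delta>(1) by simp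
  next
    fix q assume q: "q \<in> I \<times> UNIV" "q \<in> U \<times> ball x0 \<delta>"
    obtain i x where qi: "q = (i, x)" by (cases q)
    have i: "i \<in> I" "i \<in> U" and xd: "norm (x - x0) < \<delta>" using q qi by (auto simp: dist_norm norm_minus_commute)
    have x1: "norm (x - x0) \<le> 1" using xd \<delta>(2) by linarith
    have "\<bar>H i x - H i x0\<bar> \<le> norm (x - x0) * (M - m)"
      by (rule equi_bound[OF fam_cv[OF F i(1)] Mb[OF i(1)] mb[OF i(1)] x1])
    also have "\<dots> \<le> \<delta> * (M - m)" using xd Mm by (simp add: mult_right_mono)
    finally have a: "\<bar>H i x - H i x0\<bar> < e / 2" using \<delta>(3) by simp
    have b: "\<bar>H i x0 - H i0 x0\<bar> < e / 2" using U(3)[OF i] by (simp add: dist_real_def abs_minus_commute)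
    have tri: "\<bar>H i x - H i0 x0\<bar> \<le> \<bar>H i x - H i x0\<bar> + \<bar>H i x0 - H i0 x0\<bar>"
      using abs_triangle_ineq[of "H i x - H i x0" "H i x0 - H i0 x0"] by simp
    have "\<bar>H i x - H i0 x0\<bar> < e" using a b tri by linarith
    then have "dist (H i x) (H i0 x0) < e" by (simp add: dist_real_def)
    then show "(\<lambda>(i, x). H i x) q \<in> B" using e(2) qi by (auto simp: dist_commute)
  qed
qed

lemma maxf_shift:
  assumes F: "fam I F"
  shows "maxf I (\<lambda>i x. F i x + L x) x = maxf I F x + L x"
proof -
  obtain i0 where i0: "i0 \<in> I" "F i0 x = maxf I F x" using maxf_attained[OF F] by blast
  have 1: "F i0 x + L x \<in> (\<lambda>i. F i x + L x) ` I" using i0(1) by blast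
  have 2: "z \<le> F i0 x + L x" if "z \<in> (\<lambda>i. F i x + L x) ` I" for z
    using that maxf_ge[OF F] i0(2) by force
  have "maxf I (\<lambda>i x. F i x + L x) x = F i0 x + L x" unfolding maxf_def
    by (rule cSup_eq_maximum[OF 1 2])
  with i0 show ?thesis by simp
qed

lemma active_shift:
  assumes F: "fam I F"
  shows "active I (\<lambda>i x. F i x + L x) x = active I F x"
  unfolding active_def maxf_shift[OF F] by simp

lemma affine_convex:
  fixes u xb :: "'a::euclidean_space"
  shows "convex_on UNIV (\<lambda>x. c * (u \<bullet> (x - xb)))"
proof (rule convex_onI)
  fix x y :: 'a and t :: real
  have "(1 - t) *\<^sub>R x + t *\<^sub>R y - xb = (1 - t) *\<^sub>R (x - xb) + t *\<^sub>R (y - xb)"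
    by (simp add: algebra_simps)
  then show "c * (u \<bullet> ((1 - t) *\<^sub>R x + t *\<^sub>R y - xb)) \<le> (1 - t) * (c * (u \<bullet> (x - xb))) + t * (c * (u \<bullet> (y - xb)))"
    by (simp add: inner_add_right algebra_simps)
qed simp

lemma fam_shift:
  assumes F: "fam I F" and L: "convex_on UNIV L"
  shows "fam I (\<lambda>i x. F i x + L x)"
  using F L unfolding fam_def by (auto intro: convex_on_add continuous_intros)

lemma lip_from_Lipc:
  assumes "Lipc \<phi> < ereal e"
  shows "\<bar>\<phi> a - \<phi> b\<bar> \<le> e * norm (a - b)"
proof (cases "a = b")
  case False
  have ab: "(a, b) \<in> {(u, v). u \<noteq> v}" using False by simp
  have "ereal (\<bar>\<phi> a - \<phi> b\<bar> / norm (a - b)) \<le> Lipc \<phi>"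
    unfolding Lipc_def using SUP_upper[OF ab, of "\<lambda>p. ereal (\<bar>\<phi> (fst p) - \<phi> (snd p)\<bar> / norm (fst p - snd p))"] by simp
  with assms have "ereal (\<bar>\<phi> a - \<phi> b\<bar> / norm (a - b)) < ereal e" by (rule le_less_trans[rotated])
  then have "\<bar>\<phi> a - \<phi> b\<bar> / norm (a - b) < e" by simp
  then show ?thesis using False by (simp add: divide_less_eq)
qed simp

lemma Lipc_affine:
  fixes u xb :: "'a::euclidean_space"
  assumes c: "c \<ge> 0" and u: "norm u \<le> 1"
  shows "Lipc (\<lambda>x. F x - (F x + c * (u \<bullet> (x - xb)))) \<le> ereal c"
  unfolding Lipc_def
proof (rule SUP_least)
  fix p :: "'a \<times> 'a" assume "p \<in> {(u, v). u \<noteq> v}"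
  then obtain a b where p: "p = (a, b)" "a \<noteq> b" by auto
  have "c * (u \<bullet> (a - xb)) - c * (u \<bullet> (b - xb)) = c * (u \<bullet> (a - b))"
    by (simp add: inner_diff_right algebra_simps)
  then have "\<bar>c * (u \<bullet> (a - xb)) - c * (u \<bullet> (b - xb))\<bar> = c * \<bar>u \<bullet> (a - b)\<bar>"
    using c by (simp add: abs_mult)
  also have "\<dots> \<le> c * (norm u * norm (a - b))"
    using c by (intro mult_left_mono Cauchy_Schwarz_ineq2) auto
  also have "\<dots> \<le> c * norm (a - b)" using c u by (intro mult_left_mono) (auto simp: mult_left_le_one_le)
  finally have "\<bar>c * (u \<bullet> (a - xb)) - c * (u \<bullet> (b - xb))\<bar> / norm (a - b) \<le> c"
    using p(2) by (simp add: divide_le_eq)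
  then show "ereal (\<bar>(\<lambda>x. F x - (F x + c * (u \<bullet> (x - xb)))) (fst p) - (\<lambda>x. F x - (F x + c * (u \<bullet> (x - xb)))) (snd p)\<bar> / norm (fst p - snd p)) \<le> ereal c"
    using p by (simp add: abs_minus_commute)
qed

definition condA :: "'i::t2_space set \<Rightarrow> ('i \<Rightarrow> 'a::euclidean_space \<Rightarrow> real) \<Rightarrow> bool" where
  "condA I F \<longleftrightarrow> (\<exists>\<tau>>0.
            (INF x\<in>frontier (solset I F). ereal \<bar>mindir (maxf I F) x\<bar>) > ereal \<tau> \<and>
            (\<forall>z :: nat \<Rightarrow> 'a. (\<forall>k. z k \<in> solset I F - frontier (solset I F)) \<and>
                (\<exists>x :: nat \<Rightarrow> 'a. (\<forall>k. x k \<in> frontier (solset I F)) \<and>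
                   ((\<lambda>k. (maxf I F (z k) - maxf I F (x k)) / norm (z k - x k)) \<longlonglongrightarrow> 0))
              \<longrightarrow> liminf (\<lambda>k. ereal \<bar>mindir (maxf I F) (z k)\<bar>) > ereal \<tau>))"

definition condB :: "'i::t2_space set \<Rightarrow> ('i \<Rightarrow> 'a::euclidean_space \<Rightarrow> real) \<Rightarrow> bool" where
  "condB I F \<longleftrightarrow> (\<exists>c>0. \<exists>\<epsilon>>0. \<forall>G :: 'i \<Rightarrow> 'a \<Rightarrow> real.
            continuous_on (I \<times> UNIV) (\<lambda>(i, x). G i x) \<and>
            (\<forall>i\<in>I. convex_on UNIV (G i)) \<and>
            {z\<in>frontier (solset I F). \<forall>i\<in>I. F i z = G i z} \<noteq> {} \<and>
            (SUP i\<in>I. Lipc (\<lambda>x. F i x - G i x)) < ereal \<epsilon> \<and>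
            (\<forall>x. mindir (maxf I F) x < 0 \<longrightarrow> active I G x \<subseteq> active I F x) \<and>
            (\<forall>x. mindir (maxf I F) x > 0 \<longrightarrow> active I F x \<subseteq> active I G x)
            \<longrightarrow> tau_min I G \<le> ereal c)"

definition condC :: "'i::t2_space set \<Rightarrow> ('i \<Rightarrow> 'a::euclidean_space \<Rightarrow> real) \<Rightarrow> bool" where
  "condC I F \<longleftrightarrow> (\<exists>c>0. \<exists>\<epsilon>>0. \<forall>xb\<in>frontier (solset I F). \<forall>u::'a. norm u \<le> 1 \<longrightarrow>
            tau_min I (\<lambda>i x. F i x + \<epsilon> * (u \<bullet> (x - xb))) \<le> ereal c)"

lemma thmBC:
  fixes I :: "'i::t2_space set" and F :: "'i \<Rightarrow> 'a::euclidean_space \<Rightarrow> real"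
  assumes F: "fam I F" and B: "condB I F"
  shows "condC I F"
proof -
  obtain c \<epsilon> where c: "c > 0" and e: "\<epsilon> > 0" and P: "\<And>G :: 'i \<Rightarrow> 'a \<Rightarrow> real.
            continuous_on (I \<times> UNIV) (\<lambda>(i, x). G i x) \<and>
            (\<forall>i\<in>I. convex_on UNIV (G i)) \<and>
            {z\<in>frontier (solset I F). \<forall>i\<in>I. F i z = G i z} \<noteq> {} \<and>
            (SUP i\<in>I. Lipc (\<lambda>x. F i x - G i x)) < ereal \<epsilon> \<and>
            (\<forall>x. mindir (maxf I F) x < 0 \<longrightarrow> active I G x \<subseteq> active I F x) \<and>
            (\<forall>x. mindir (maxf I F) x > 0 \<longrightarrow> active I F x \<subseteq> active I G x)
            \<Longrightarrow> tau_min I G \<le> ereal c"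
    using B unfolding condB_def by blast
  have "\<forall>xb\<in>frontier (solset I F). \<forall>u::'a. norm u \<le> 1 \<longrightarrow>
            tau_min I (\<lambda>i x. F i x + (\<epsilon>/2) * (u \<bullet> (x - xb))) \<le> ereal c"
  proof (intro ballI allI impI)
    fix xb and u :: 'a assume xb: "xb \<in> frontier (solset I F)" and u: "norm u \<le> 1"
    define L where "L x = (\<epsilon>/2) * (u \<bullet> (x - xb))" for x
    define G where "G = (\<lambda>i x. F i x + L x)"
    have Lcv: "convex_on UNIV L" unfolding L_def by (rule affine_convex)
    have contL: "continuous_on UNIV L" unfolding L_def by (intro continuous_intros)
    have "continuous_on (I \<times> UNIV) (\<lambda>p. (\<lambda>(i, x). F i x) p + L (snd p))"
      by (intro continuous_on_add joint_cont[OF F] continuous_on_compose2[OF contL] continuous_intros) auto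
    moreover have "(\<lambda>(i, x). G i x) = (\<lambda>p. (\<lambda>(i, x). F i x) p + L (snd p))"
      by (auto simp: G_def)
    ultimately have c1: "continuous_on (I \<times> UNIV) (\<lambda>(i, x). G i x)" by simp
    have c2: "\<forall>i\<in>I. convex_on UNIV (G i)"
      unfolding G_def using fam_cv[OF F] Lcv by (auto intro: convex_on_add)
    have "xb \<in> {z\<in>frontier (solset I F). \<forall>i\<in>I. F i z = G i z}"
      using xb by (simp add: G_def L_def)
    then have c3: "{z\<in>frontier (solset I F). \<forall>i\<in>I. F i z = G i z} \<noteq> {}" by blast
    have "(SUP i\<in>I. Lipc (\<lambda>x. F i x - G i x)) \<le> ereal (\<epsilon>/2)"
      unfolding G_def L_def by (rule SUP_least) (rule Lipc_affine, use e u in auto)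
    also have "\<dots> < ereal \<epsilon>" using e by simp
    finally have c4: "(SUP i\<in>I. Lipc (\<lambda>x. F i x - G i x)) < ereal \<epsilon>" .
    have act: "active I G x = active I F x" for x unfolding G_def by (rule active_shift[OF F])
    have "tau_min I G \<le> ereal c" using P[of G] c1 c2 c3 c4 act by simp
    then show "tau_min I (\<lambda>i x. F i x + (\<epsilon>/2) * (u \<bullet> (x - xb))) \<le> ereal c"
      by (simp add: G_def L_def)
  qed
  then show ?thesis unfolding condC_def using c e by (intro exI[of _ c] conjI exI[of _ "\<epsilon>/2"]) auto
qed

lemma cs_unit: "norm (v::'a::euclidean_space) = 1 \<Longrightarrow> v \<bullet> z \<le> norm z"
  using norm_cauchy_schwarz[of v z] by simp

lemma quarter_aux: "(X::real) \<le> 1/4 * X \<Longrightarrow> 0 < X \<Longrightarrow> False" by linarith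

lemma thmCA:
  fixes I :: "'i::t2_space set" and F :: "'i \<Rightarrow> 'a::euclidean_space \<Rightarrow> real"
  assumes F: "fam I F" and C: "condC I F"
  shows "condA I F"
proof -
  define f where "f = maxf I F"
  define S where "S = solset I F"
  have cf: "convex_on UNIV f" unfolding f_def by (rule maxf_convex[OF F])
  have f0: "f x = 0" if "x \<in> frontier S" for x using frontier_zero[OF F] that by (simp add: f_def S_def)
  obtain c \<epsilon> where c: "c > 0" and e: "\<epsilon> > 0" and TP: "\<And>xb u. xb \<in> frontier S \<Longrightarrow> norm (u::'a) \<le> 1 \<Longrightarrow>
            tau_min I (\<lambda>i x. F i x + \<epsilon> * (u \<bullet> (x - xb))) \<le> ereal c"
    using C unfolding condC_def S_def by blast
  have TT: "D \<le> c * (f y + a \<bullet> (y - xb))"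
    if xb: "xb \<in> frontier S" and a: "norm a \<le> \<epsilon>" and gy: "f y + a \<bullet> (y - xb) > 0"
      and D: "\<And>x. f x + a \<bullet> (x - xb) \<le> 0 \<Longrightarrow> D \<le> norm (y - x)" for xb a y D
  proof -
    define u where "u = (1 / \<epsilon>) *\<^sub>R a"
    have nu: "norm u \<le> 1" using a e by (simp add: u_def divide_le_eq)
    define G where "G = (\<lambda>i x. F i x + \<epsilon> * (u \<bullet> (x - xb)))"
    have eu: "\<epsilon> * (u \<bullet> z) = a \<bullet> z" for z using e by (simp add: u_def)
    have FG: "fam I G" unfolding G_def by (rule fam_shift[OF F affine_convex])
    have mG: "maxf I G x = f x + a \<bullet> (x - xb)" for x
      unfolding G_def f_def using maxf_shift[OF F] eu by simp
    have "D \<le> c * maxf I G y"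
    proof (rule tau_rev)
      show "tau_min I G \<le> ereal c" unfolding G_def by (rule TP[OF xb nu])
      show "0 < maxf I G y" using gy mG by simp
      fix x assume "x \<in> solset I G"
      then have "maxf I G x \<le> 0" using solset_eq[OF FG] by simp
      then show "D \<le> norm (y - x)" using D mG by simp
    qed
    then show ?thesis using mG by simp
  qed
  define \<eta> where "\<eta> = min (\<epsilon>/2) (1 / (4 * c))"
  have \<eta>: "\<eta> > 0" "\<eta> \<le> \<epsilon>/2" "\<eta> \<le> 1 / (4 * c)" using e c by (auto simp: \<eta>_def)
  have c\<eta>: "c * \<eta> \<le> 1/4" using \<eta>(3) c by (simp add: le_divide_eq mult.commute)
  define \<tau>2 where "\<tau>2 = \<eta> / 3"
  have Bd: "\<tau>2 \<le> \<bar>mindir f xb\<bar>" if xb: "xb \<in> frontier S" for xb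
  proof (rule ccontr)
    assume "\<not> ?thesis"
    then have s: "\<bar>mindir f xb\<bar> < \<tau>2" by simp
    define s where "s = \<bar>mindir f xb\<bar>"
    obtain w where w: "norm w \<le> s" "\<And>y. f xb + w \<bullet> (y - xb) \<le> f y"
      using subgrad[OF cf, of xb] unfolding s_def by blast
    have "mindir f xb < mindir f xb + \<eta>/6" using \<eta> by simp
    then obtain v where v: "norm v = 1" "dirder f xb v < mindir f xb + \<eta>/6" using mindir_lessD by blast
    obtain t where t: "0 < t" "dq f xb v t < mindir f xb + \<eta>/6"
      using dirder_exists_t[OF cf v(2), of 1] by auto
    define a where "a = \<eta> *\<^sub>R v - w"
    have na: "norm a \<le> \<epsilon>"
    proof -
      have "norm a \<le> norm (\<eta> *\<^sub>R v) + norm w" unfolding a_def by (rule norm_triangle_ineq4)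
      also have "\<dots> \<le> \<eta> + s" using w(1) v(1) \<eta>(1) by simp
      finally show ?thesis using s \<eta> unfolding s_def \<tau>2_def by linarith
    qed
    define y where "y = xb + t *\<^sub>R v"
    have fxb: "f xb = 0" by (rule f0[OF xb])
    have glow: "f x + a \<bullet> (x - xb) \<ge> \<eta> * (v \<bullet> (x - xb))" for x
      using w(2)[of x] fxb by (simp add: a_def inner_diff_left)
    have vv: "v \<bullet> v = 1" using v(1) by (simp add: dot_square_norm)
    have gy_eq: "f y + a \<bullet> (y - xb) = f y - t * (w \<bullet> v) + \<eta> * t"
      using vv by (simp add: y_def a_def inner_diff_left inner_diff_right inner_commute algebra_simps)
    have gypos: "f y + a \<bullet> (y - xb) > 0"
    proof -
      have "\<eta> * (v \<bullet> (y - xb)) = \<eta> * t" using vv by (simp add: y_def)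
      moreover have "0 < \<eta> * t" using \<eta>(1) t(1) by simp
      ultimately show ?thesis using glow[of y] by linarith
    qed
    have Dt: "t \<le> norm (y - x)" if "f x + a \<bullet> (x - xb) \<le> 0" for x
    proof -
      have "\<eta> * (v \<bullet> (x - xb)) \<le> 0" using glow[of x] that by simp
      then have vx: "v \<bullet> (x - xb) \<le> 0" using \<eta>(1) by (simp add: mult_le_0_iff)
      have "v \<bullet> (y - x) = t - v \<bullet> (x - xb)" using vv by (simp add: y_def inner_diff_right inner_add_right)
      moreover have "v \<bullet> (y - x) \<le> norm (y - x)" by (rule cs_unit[OF v(1)])
      ultimately show ?thesis using vx by simp
    qed
    have tle: "t \<le> c * (f y + a \<bullet> (y - xb))" by (rule TT[OF xb na gypos Dt])
    have fy: "f y < t * (mindir f xb + \<eta>/6)"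
      using t fxb unfolding dq_def y_def by (simp add: pos_divide_less_eq mult.commute)
    have wv: "- (w \<bullet> v) \<le> s"
    proof -
      have "- (w \<bullet> v) \<le> norm w * norm v" using norm_cauchy_schwarz[of "- w" v] by simp
      then show ?thesis using w(1) v(1) by simp
    qed
    have "f y + a \<bullet> (y - xb) < t * (mindir f xb + \<eta>/6) + t * s + \<eta> * t"
      using gy_eq fy mult_left_mono[OF wv less_imp_le[OF t(1)]] by (simp add: algebra_simps)
    also have "\<dots> \<le> t * (2 * \<eta>)"
    proof -
      have "mindir f xb \<le> s" unfolding s_def by simp
      then have "mindir f xb + \<eta>/6 + s + \<eta> \<le> 2 * \<eta>" using s unfolding s_def \<tau>2_def by linarith
      then have "t * (mindir f xb + \<eta>/6 + s + \<eta>) \<le> t * (2 * \<eta>)" using t(1) by (simp add: mult_left_mono)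
      then show ?thesis by (simp add: algebra_simps)
    qed
    finally have "c * (f y + a \<bullet> (y - xb)) < c * (t * (2 * \<eta>))" using c by simp
    also have "\<dots> = t * 2 * (c * \<eta>)" by (simp add: algebra_simps)
    also have "\<dots> \<le> t * 2 * (1/4)" using c\<eta> t(1) by (intro mult_left_mono) auto
    finally show False using tle t(1) by simp
  qed
  have Q: "\<tau>2 \<le> \<bar>mindir f z\<bar>"
    if xb: "xb \<in> frontier S" and zx: "z \<noteq> xb" and fz: "f z > - \<tau>2 * norm (z - xb)" for z xb
  proof (rule ccontr)
    assume "\<not> ?thesis"
    then have s: "\<bar>mindir f z\<bar> < \<tau>2" by simp
    define s where "s = \<bar>mindir f z\<bar>"
    obtain w where w: "norm w \<le> s" "\<And>y. f z + w \<bullet> (y - z) \<le> f y"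
      using subgrad[OF cf, of z] unfolding s_def by blast
    define R where "R = norm (z - xb)"
    have R: "R > 0" using zx by (simp add: R_def)
    define v where "v = (1 / R) *\<^sub>R (z - xb)"
    have v: "norm v = 1" using R by (simp add: v_def R_def)
    have vz: "v \<bullet> (z - xb) = R" using R by (simp add: v_def R_def dot_square_norm power2_eq_square)
    define a where "a = \<eta> *\<^sub>R v - w"
    have na: "norm a \<le> \<epsilon>"
    proof -
      have "norm a \<le> norm (\<eta> *\<^sub>R v) + norm w" unfolding a_def by (rule norm_triangle_ineq4)
      also have "\<dots> \<le> \<eta> + s" using w(1) v \<eta>(1) by simp
      finally show ?thesis using s \<eta> unfolding s_def \<tau>2_def by linarith
    qed
    define C where "C = f z + w \<bullet> (xb - z)"
    have glow: "f x + a \<bullet> (x - xb) \<ge> C + \<eta> * (v \<bullet> (x - xb))" for x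
    proof -
      have "f x \<ge> f z + w \<bullet> (x - z)" by (rule w(2))
      moreover have "w \<bullet> (x - z) - w \<bullet> (x - xb) = w \<bullet> (xb - z)" by (simp add: inner_diff_right)
      ultimately show ?thesis by (simp add: a_def C_def inner_diff_left)
    qed
    have gz: "f z + a \<bullet> (z - xb) = C + \<eta> * R"
    proof -
      have "w \<bullet> (z - xb) = - (w \<bullet> (xb - z))" by (simp add: inner_diff_right)
      then show ?thesis using vz by (simp add: a_def C_def inner_diff_left)
    qed
    have Cl: "C \<ge> f z - s * R"
    proof -
      have "- (w \<bullet> (xb - z)) \<le> norm w * norm (xb - z)" using norm_cauchy_schwarz[of "- w" "xb - z"] by simp
      also have "\<dots> \<le> s * R" using w(1) by (simp add: R_def norm_minus_commute mult_right_mono)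
      finally show ?thesis by (simp add: C_def)
    qed
    have gzpos: "C + \<eta> * R > \<eta> * R / 3"
    proof -
      have "s * R \<le> \<tau>2 * R" using s R unfolding s_def by simp
      then have "C > - \<tau>2 * R - \<tau>2 * R" using Cl fz unfolding R_def by simp
      then show ?thesis unfolding \<tau>2_def by (simp add: algebra_simps)
    qed
    have "\<eta> * R / 3 > 0" using \<eta>(1) R by simp
    then have gzp: "f z + a \<bullet> (z - xb) > 0" using gz gzpos by linarith
    have Dz: "(C + \<eta> * R) / \<eta> \<le> norm (z - x)" if "f x + a \<bullet> (x - xb) \<le> 0" for x
    proof -
      have "C + \<eta> * (v \<bullet> (x - xb)) \<le> 0" using glow[of x] that by simp
      then have "(v \<bullet> (x - xb)) * \<eta> \<le> - C" by (simp add: mult.commute)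
      then have vx: "v \<bullet> (x - xb) \<le> (- C) / \<eta>" using \<eta>(1) by (subst pos_le_divide_eq) auto
      have "v \<bullet> (z - x) = R - v \<bullet> (x - xb)" using vz by (simp add: inner_diff_right)
      moreover have "v \<bullet> (z - x) \<le> norm (z - x)" by (rule cs_unit[OF v])
      moreover have "(C + \<eta> * R) / \<eta> = R + C / \<eta>" using \<eta>(1) by (simp add: add_divide_distrib)
      moreover have "(- C) / \<eta> = - (C / \<eta>)" by simp
      ultimately show ?thesis using vx by linarith
    qed
    have "(C + \<eta> * R) / \<eta> \<le> c * (f z + a \<bullet> (z - xb))" by (rule TT[OF xb na gzp Dz])
    then have "(C + \<eta> * R) / \<eta> \<le> c * (C + \<eta> * R)" using gz by simp
    then have "C + \<eta> * R \<le> c * (C + \<eta> * R) * \<eta>" using \<eta>(1) by (simp add: pos_divide_le_eq)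
    also have "\<dots> = (c * \<eta>) * (C + \<eta> * R)" by (simp add: algebra_simps)
    also have "\<dots> \<le> (1/4) * (C + \<eta> * R)" using c\<eta> gzp gz by (intro mult_right_mono) auto
    finally have "C + \<eta> * R \<le> (1/4) * (C + \<eta> * R)" .
    moreover have "0 < C + \<eta> * R" using gzp gz by simp
    ultimately show False by (rule quarter_aux)
  qed
  define \<tau> where "\<tau> = \<tau>2 / 2"
  have \<tau>: "\<tau> > 0" "\<tau> < \<tau>2" using \<eta> by (auto simp: \<tau>_def \<tau>2_def)
  have A1: "(INF x\<in>frontier S. ereal \<bar>mindir f x\<bar>) > ereal \<tau>"
  proof -
    have "ereal \<tau>2 \<le> (INF x\<in>frontier S. ereal \<bar>mindir f x\<bar>)"
      by (rule INF_greatest) (use Bd in simp)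
    moreover have "ereal \<tau> < ereal \<tau>2" using \<tau> by simp
    ultimately show ?thesis by (rule less_le_trans[rotated])
  qed
  have A2: "liminf (\<lambda>k. ereal \<bar>mindir f (z k)\<bar>) > ereal \<tau>"
    if z: "\<forall>k. z k \<in> S - frontier S" and x: "\<forall>k. x k \<in> frontier S"
      and lim: "(\<lambda>k. (f (z k) - f (x k)) / norm (z k - x k)) \<longlonglongrightarrow> 0" for z x :: "nat \<Rightarrow> 'a"
  proof -
    have ev: "\<forall>\<^sub>F k in sequentially. - \<tau>2 < (f (z k) - f (x k)) / norm (z k - x k)"
      using order_tendstoD(1)[OF lim, of "- \<tau>2"] \<eta> by (simp add: \<tau>2_def)
    have ev2: "\<forall>\<^sub>F k in sequentially. ereal \<tau>2 \<le> ereal \<bar>mindir f (z k)\<bar>"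
    proof (rule eventually_mono[OF ev])
      fix k assume h: "- \<tau>2 < (f (z k) - f (x k)) / norm (z k - x k)"
      have zx: "z k \<noteq> x k" using z x by (metis DiffD2)
      have "f (x k) = 0" using f0 x by simp
      then have "- \<tau>2 * norm (z k - x k) < f (z k)" using h zx by (simp add: less_divide_eq)
      then show "ereal \<tau>2 \<le> ereal \<bar>mindir f (z k)\<bar>" using Q[of "x k" "z k"] x zx by simp
    qed
    have "ereal \<tau>2 \<le> liminf (\<lambda>k. ereal \<bar>mindir f (z k)\<bar>)"
      unfolding le_Liminf_iff
    proof (intro allI impI)
      fix y :: ereal assume y: "y < ereal \<tau>2"
      show "\<forall>\<^sub>F k in sequentially. y < ereal \<bar>mindir f (z k)\<bar>"
      proof (rule eventually_mono[OF ev2])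
        fix k assume "ereal \<tau>2 \<le> ereal \<bar>mindir f (z k)\<bar>"
        with y show "y < ereal \<bar>mindir f (z k)\<bar>" by (rule less_le_trans)
      qed
    qed
    moreover have "ereal \<tau> < ereal \<tau>2" using \<tau> by simp
    ultimately show ?thesis by (rule less_le_trans[rotated])
  qed
  show ?thesis unfolding condA_def
    using \<tau> A1 A2 unfolding f_def[symmetric] S_def[symmetric] by blast
qed

lemma thmAB:
  fixes I :: "'i::t2_space set" and F :: "'i \<Rightarrow> 'a::euclidean_space \<Rightarrow> real"
  assumes F: "fam I F" and A: "condA I F"
  shows "condB I F"
proof -
  define f where "f = maxf I F"
  define S where "S = solset I F"
  have cf: "convex_on UNIV f" unfolding f_def by (rule maxf_convex[OF F])
  have Seq: "S = {x. f x \<le> 0}" unfolding S_def f_def by (rule solset_eq[OF F])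
  have clS: "closed S" unfolding S_def by (rule solset_closed[OF F])
  have f0: "f x = 0" if "x \<in> frontier S" for x using frontier_zero[OF F] that by (simp add: f_def S_def)
  have frS: "x \<in> S" if "x \<in> frontier S" for x using that clS by (simp add: frontier_def)
  obtain \<tau> where tp: "\<tau> > 0" and inf: "(INF x\<in>frontier S. ereal \<bar>mindir f x\<bar>) > ereal \<tau>"
    and qc: "\<And>z :: nat \<Rightarrow> 'a. (\<forall>k. z k \<in> S - frontier S) \<and>
                (\<exists>x :: nat \<Rightarrow> 'a. (\<forall>k. x k \<in> frontier S) \<and>
                   ((\<lambda>k. (f (z k) - f (x k)) / norm (z k - x k)) \<longlonglongrightarrow> 0))
              \<Longrightarrow> liminf (\<lambda>k. ereal \<bar>mindir f (z k)\<bar>) > ereal \<tau>"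
    using A unfolding condA_def f_def[symmetric] S_def[symmetric] by blast
  have bd: "\<tau> < \<bar>mindir f p\<bar>" if "p \<in> frontier S" for p
    using less_INF_D[OF inf that] by simp
  have "\<exists>\<epsilon>0>0. \<forall>z y. z \<in> S - frontier S \<longrightarrow> y \<in> frontier S \<longrightarrow> - \<epsilon>0 * norm (z - y) \<le> f z \<longrightarrow> mindir f z \<le> - \<tau>"
  proof (rule ccontr)
    assume "\<not> ?thesis"
    then have "\<forall>n::nat. \<exists>z y. z \<in> S - frontier S \<and> y \<in> frontier S \<and> - (1 / real (Suc n)) * norm (z - y) \<le> f z \<and> mindir f z > - \<tau>"
      by (metis not_le of_nat_0_less_iff zero_less_Suc divide_pos_pos zero_less_one)
    then obtain Z Y where ZY: "\<And>n. Z n \<in> S - frontier S" "\<And>n. Y n \<in> frontier S"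
        "\<And>n. - (1 / real (Suc n)) * norm (Z n - Y n) \<le> f (Z n)" "\<And>n. mindir f (Z n) > - \<tau>"
      by metis
    have ZYne: "Z n \<noteq> Y n" for n using ZY(1,2) by (metis DiffD2)
    have Rp: "norm (Z n - Y n) > 0" for n using ZYne by simp
    have fY: "f (Y n) = 0" for n using f0 ZY(2) by simp
    have fZ: "f (Z n) \<le> 0" for n using ZY(1) Seq by auto
    have lo: "- (1 / real (Suc n)) \<le> (f (Z n) - f (Y n)) / norm (Z n - Y n)" for n
      using ZY(3)[of n] Rp[of n] fY[of n] by (simp add: le_divide_eq)
    have hi: "(f (Z n) - f (Y n)) / norm (Z n - Y n) \<le> 0" for n
      using fZ[of n] fY[of n] Rp[of n] by (simp add: divide_le_0_iff)
    have l1: "(\<lambda>n. - (1 / real (Suc n))) \<longlonglongrightarrow> 0"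
      using tendsto_minus[OF LIMSEQ_inverse_real_of_nat] by (simp add: inverse_eq_divide)
    have lim: "(\<lambda>n. (f (Z n) - f (Y n)) / norm (Z n - Y n)) \<longlonglongrightarrow> 0"
      by (rule tendsto_sandwich[OF _ _ l1 tendsto_const]) (use lo hi in auto)
    have "liminf (\<lambda>k. ereal \<bar>mindir f (Z k)\<bar>) > ereal \<tau>"
      by (rule qc) (use ZY(1,2) lim in blast)
    then have ev1: "\<forall>\<^sub>F n in sequentially. ereal \<tau> < ereal \<bar>mindir f (Z n)\<bar>"
      by (rule less_LiminfD)
    have ev2: "\<forall>\<^sub>F n in sequentially. 1 / real (Suc n) < \<tau>"
      using order_tendstoD(2)[OF LIMSEQ_inverse_real_of_nat tp] by (simp add: inverse_eq_divide)
    obtain n where n: "ereal \<tau> < ereal \<bar>mindir f (Z n)\<bar>" "1 / real (Suc n) < \<tau>"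
      using eventually_happens[OF eventually_conj[OF ev1 ev2]] by auto
    define \<sigma> where "\<sigma> = mindir f (Z n)"
    have \<sigma>: "\<sigma> > \<tau>" using n(1) ZY(4)[of n] by (auto simp: \<sigma>_def)
    have "f (Z n) + \<sigma> * norm (Y n - Z n) \<le> f (Y n)" unfolding \<sigma>_def by (rule mindir_step[OF cf])
    then have "f (Z n) \<le> - \<sigma> * norm (Z n - Y n)" using fY by (simp add: norm_minus_commute)
    moreover have "- \<sigma> * norm (Z n - Y n) < - \<tau> * norm (Z n - Y n)" using \<sigma> Rp[of n] by simp
    moreover have "(1 / real (Suc n)) * norm (Z n - Y n) < \<tau> * norm (Z n - Y n)"
      using n(2) Rp[of n] by (rule mult_strict_right_mono)
    then have "- \<tau> * norm (Z n - Y n) < - (1 / real (Suc n)) * norm (Z n - Y n)"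
      by simp
    ultimately show False using ZY(3)[of n] by linarith
  qed
  then obtain \<epsilon>0 where e0: "\<epsilon>0 > 0"
    and e0P: "\<And>z y. z \<in> S - frontier S \<Longrightarrow> y \<in> frontier S \<Longrightarrow> - \<epsilon>0 * norm (z - y) \<le> f z \<Longrightarrow> mindir f z \<le> - \<tau>"
    by blast
  define \<epsilon> where "\<epsilon> = min \<epsilon>0 (\<tau> / 2)"
  have e: "\<epsilon> > 0" "\<epsilon> \<le> \<epsilon>0" "\<epsilon> \<le> \<tau>/2" using e0 tp by (auto simp: \<epsilon>_def)
  have "\<forall>G :: 'i \<Rightarrow> 'a \<Rightarrow> real.
            continuous_on (I \<times> UNIV) (\<lambda>(i, x). G i x) \<and>
            (\<forall>i\<in>I. convex_on UNIV (G i)) \<and>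
            {z\<in>frontier (solset I F). \<forall>i\<in>I. F i z = G i z} \<noteq> {} \<and>
            (SUP i\<in>I. Lipc (\<lambda>x. F i x - G i x)) < ereal \<epsilon> \<and>
            (\<forall>x. mindir (maxf I F) x < 0 \<longrightarrow> active I G x \<subseteq> active I F x) \<and>
            (\<forall>x. mindir (maxf I F) x > 0 \<longrightarrow> active I F x \<subseteq> active I G x)
            \<longrightarrow> tau_min I G \<le> ereal (4 / \<tau>)"
  proof (intro allI impI, elim conjE)
    fix G :: "'i \<Rightarrow> 'a \<Rightarrow> real"
    assume contG: "continuous_on (I \<times> UNIV) (\<lambda>(i, x). G i x)"
      and cvG: "\<forall>i\<in>I. convex_on UNIV (G i)"
      and agr: "{z\<in>frontier (solset I F). \<forall>i\<in>I. F i z = G i z} \<noteq> {}"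
      and lipG: "(SUP i\<in>I. Lipc (\<lambda>x. F i x - G i x)) < ereal \<epsilon>"
      and act1: "\<forall>x. mindir (maxf I F) x < 0 \<longrightarrow> active I G x \<subseteq> active I F x"
    obtain xb where xb: "xb \<in> frontier S" "\<And>i. i \<in> I \<Longrightarrow> F i xb = G i xb"
      using agr unfolding S_def by blast
    have cI: "compact I" "I \<noteq> {}" using F by (auto simp: fam_def)
    have contGi: "continuous_on I (\<lambda>i. G i x)" for x
    proof -
      have "continuous_on I (\<lambda>i. (\<lambda>(i, x). G i x) (i, x))"
        by (rule continuous_on_compose2[OF contG]) (auto intro!: continuous_intros)
      then show ?thesis by simp
    qed
    have FG: "fam I G" using cI cvG contGi by (simp add: fam_def)
    define g where "g = maxf I G"
    have cg: "convex_on UNIV g" unfolding g_def by (rule maxf_convex[OF FG])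
    have lip: "\<bar>(G i a - F i a) - (G i b - F i b)\<bar> \<le> \<epsilon> * norm (a - b)" if i: "i \<in> I" for i a b
    proof -
      have "Lipc (\<lambda>x. F i x - G i x) \<le> (SUP i\<in>I. Lipc (\<lambda>x. F i x - G i x))"
        by (rule SUP_upper[OF i])
      then have "Lipc (\<lambda>x. F i x - G i x) < ereal \<epsilon>" using lipG by (rule le_less_trans)
      from lip_from_Lipc[OF this, of a b] show ?thesis by (simp add: abs_minus_commute algebra_simps)
    qed
    have gle: "g y \<le> f y + \<epsilon> * norm (y - xb)" for y
      unfolding g_def
    proof (rule maxf_le[OF FG])
      fix i assume i: "i \<in> I"
      have "G i y - F i y \<le> \<epsilon> * norm (y - xb)" using lip[OF i, of y xb] xb(2)[OF i] by simp
      moreover have "F i y \<le> f y" unfolding f_def by (rule maxf_ge[OF F i])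
      ultimately show "G i y \<le> f y + \<epsilon> * norm (y - xb)" by simp
    qed
    have fxb: "f xb = 0" by (rule f0[OF xb(1)])
    have gxb: "g xb = f xb" unfolding g_def f_def maxf_def using xb(2) by (auto intro: SUP_cong)
    have xbS: "xb \<in> S" by (rule frS[OF xb(1)])
    have SGne: "solset I G \<noteq> {}"
    proof -
      have "maxf I G xb \<le> 0" using gxb fxb by (simp add: g_def)
      then show ?thesis using solset_eq[OF FG] by auto
    qed
    have slope: "mindir g y \<le> - (\<tau> / 2)" if gy: "g y > 0" for y
    proof -
      have fyl: "- \<epsilon>0 * norm (y - xb) \<le> f y"
      proof -
        have "- \<epsilon> * norm (y - xb) < f y" using gle[of y] gy by simp
        moreover have "- \<epsilon>0 * norm (y - xb) \<le> - \<epsilon> * norm (y - xb)" using e by (simp add: mult_right_mono)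
        ultimately show ?thesis by simp
      qed
      have mf: "mindir f y \<le> - \<tau>"
      proof (cases "y \<in> S")
        case False
        then have "f y > 0" using Seq by simp
        moreover have "{x. f x \<le> 0} \<noteq> {}" using xbS Seq by auto
        ultimately show ?thesis using outside_slope[OF cf _ tp] bd Seq by auto
      next
        case True
        show ?thesis
        proof (cases "y \<in> frontier S")
          case False
          with True show ?thesis using e0P[OF _ xb(1) fyl] by simp
        next
          case yfr: True
          have b: "\<tau> < \<bar>mindir f y\<bar>" by (rule bd[OF yfr])
          show ?thesis
          proof (cases "mindir f y > 0")
            case True
            have "f y + mindir f y * norm (xb - y) \<le> f xb" by (rule mindir_step[OF cf])
            then have "mindir f y * norm (xb - y) \<le> 0" using f0[OF yfr] fxb by simp
            then have "norm (xb - y) \<le> 0" using True by (simp add: mult_le_0_iff)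
            then have "xb = y" by simp
            then have "g y = 0" using gxb fxb by simp
            with gy show ?thesis by simp
          next
            case False
            then show ?thesis using b by simp
          qed
        qed
      qed
      have actsub: "active I G y \<subseteq> active I F y" using act1 mf tp by (simp add: f_def)
      have "mindir g y \<le> mindir f y + \<epsilon>"
      proof (rule field_le_epsilon)
        fix \<delta> :: real assume \<delta>: "\<delta> > 0"
        have "mindir f y < mindir f y + \<delta>" using \<delta> by simp
        then obtain h where h: "norm h = 1" "dirder f y h < mindir f y + \<delta>" using mindir_lessD by blast
        obtain i where i: "i \<in> active I G y" "dirder (maxf I G) y h \<le> dirder (G i) y h"
          using danskin[OF FG] by blast
        have iF: "i \<in> active I F y" using i(1) actsub by blast
        then have iI: "i \<in> I" and Fiy: "F i y = f y" by (auto simp: active_def f_def)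
        have "dirder (G i) y h \<le> dirder (F i) y h + \<epsilon> * norm h"
          by (rule dirder_lip[OF fam_cv[OF F iI] fam_cv[OF FG iI] lip[OF iI]])
        moreover have "dirder (F i) y h \<le> dirder f y h"
          by (rule dirder_dom[OF fam_cv[OF F iI] cf]) (use maxf_ge[OF F iI] Fiy in \<open>auto simp: f_def\<close>)
        moreover have "mindir g y \<le> dirder g y h" by (rule mindir_le[OF cg h(1)])
        ultimately show "mindir g y \<le> mindir f y + \<epsilon> + \<delta>" using h i(2) by (simp add: g_def)
      qed
      then show ?thesis using mf e(3) by simp
    qed
    have "tau_min I G \<le> ereal (2 / (\<tau> / 2))"
      by (rule error_bound[OF FG SGne]) (use tp slope in \<open>auto simp: g_def\<close>)
    then show "tau_min I G \<le> ereal (4 / \<tau>)" by simp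
  qed
  then show ?thesis unfolding condB_def using tp e(1)
    by (intro exI[of _ "4 / \<tau>"] conjI exI[of _ \<epsilon>]) auto
qed

theorem theorem14:
  fixes I :: "'i::t2_space set" and F :: "'i \<Rightarrow> 'a::euclidean_space \<Rightarrow> real"
  assumes "compact I" and "I \<noteq> {}"
    and "\<And>i. i \<in> I \<Longrightarrow> convex_on UNIV (F i)"
    and "\<And>x. continuous_on I (\<lambda>i. F i x)"
  shows "((\<exists>\<tau>>0.
            (INF x\<in>frontier (solset I F). ereal \<bar>mindir (maxf I F) x\<bar>) > ereal \<tau> \<and>
            (\<forall>z :: nat \<Rightarrow> 'a. (\<forall>k. z k \<in> solset I F - frontier (solset I F)) \<and>
                (\<exists>x :: nat \<Rightarrow> 'a. (\<forall>k. x k \<in> frontier (solset I F)) \<and>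
                   ((\<lambda>k. (maxf I F (z k) - maxf I F (x k)) / norm (z k - x k)) \<longlonglongrightarrow> 0))
              \<longrightarrow> liminf (\<lambda>k. ereal \<bar>mindir (maxf I F) (z k)\<bar>) > ereal \<tau>))
         \<longleftrightarrow>
         (\<exists>c>0. \<exists>\<epsilon>>0. \<forall>G :: 'i \<Rightarrow> 'a \<Rightarrow> real.
            continuous_on (I \<times> UNIV) (\<lambda>(i, x). G i x) \<and>
            (\<forall>i\<in>I. convex_on UNIV (G i)) \<and>
            {z\<in>frontier (solset I F). \<forall>i\<in>I. F i z = G i z} \<noteq> {} \<and>
            (SUP i\<in>I. Lipc (\<lambda>x. F i x - G i x)) < ereal \<epsilon> \<and>
            (\<forall>x. mindir (maxf I F) x < 0 \<longrightarrow> active I G x \<subseteq> active I F x) \<and>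
            (\<forall>x. mindir (maxf I F) x > 0 \<longrightarrow> active I F x \<subseteq> active I G x)
            \<longrightarrow> tau_min I G \<le> ereal c))
      \<and>
        ((\<exists>c>0. \<exists>\<epsilon>>0. \<forall>G :: 'i \<Rightarrow> 'a \<Rightarrow> real.
            continuous_on (I \<times> UNIV) (\<lambda>(i, x). G i x) \<and>
            (\<forall>i\<in>I. convex_on UNIV (G i)) \<and>
            {z\<in>frontier (solset I F). \<forall>i\<in>I. F i z = G i z} \<noteq> {} \<and>
            (SUP i\<in>I. Lipc (\<lambda>x. F i x - G i x)) < ereal \<epsilon> \<and>
            (\<forall>x. mindir (maxf I F) x < 0 \<longrightarrow> active I G x \<subseteq> active I F x) \<and>
            (\<forall>x. mindir (maxf I F) x > 0 \<longrightarrow> active I F x \<subseteq> active I G x)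
            \<longrightarrow> tau_min I G \<le> ereal c)
         \<longleftrightarrow>
         (\<exists>c>0. \<exists>\<epsilon>>0. \<forall>xb\<in>frontier (solset I F). \<forall>u::'a. norm u \<le> 1 \<longrightarrow>
            tau_min I (\<lambda>i x. F i x + \<epsilon> * (u \<bullet> (x - xb))) \<le> ereal c))"
proof -
  have F: "fam I F" using assms unfolding fam_def by blast
  have "(condA I F \<longleftrightarrow> condB I F) \<and> (condB I F \<longleftrightarrow> condC I F)"
    using thmAB[OF F] thmBC[OF F] thmCA[OF F] by blast
  then show ?thesis unfolding condA_def condB_def condC_def .
qed

end
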